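(* Let $(\Omega,\mathcal F)$ be a measurable space with $\Sigma\neq\emptyset$, and let $v:\mathcal F\to\mathbb R$ be a non-decreasing, continuous, submodular set function with $v(\emptyset)=0$. Then for every bounded measurable $f:\Omega\to\mathbb R$, $$v(f)=\sup_{\mathcal I\in\Sigma}\int_\Omega f(\omega)\,\mu_{v,\mathcal I}(d\omega).$$
   Context: $\Sigma$ denotes the set of all classes $\mathcal I\subset\mathcal F$ that are chains (totally ordered by inclusion), contain $\emptyset$ and $\Omega$, and generate $\mathcal F$ as a $\sigma$-algebra. $v$ is non-decreasing if $v(A)\le v(B)$ for $A\subset B$; submodular if $v(A)+v(B)\ge v(A\cup B)+v(A\cap B)$. For $\mathcal I\in\Sigma$ let $\mathcal J$ be the algebra generated by $\mathcal I$, whose elements are the sets $\bigcup_{i=1}^n (C_i\cap D_i^c)$ with $C_1\supset D_1\supset\cdots\supset C_n\supset D_n$ in $\mathcal I$; define $\mu_{v,\mathcal I}(\bigcup_{i=1}^n (C_i\cap D_i^c))=\sum_{i=1}^n(v(C_i)-v(D_i))$. $v$ is continuous if for every $\mathcal I\in\Sigma$ this $\mu_{v,\mathcal I}$ is $\sigma$-additive on $\mathcal J$; it then extends uniquely to a measure $\mu_{v,\mathcal I}$ on $\mathcal F$. The Choquet integral is $v(f)=\lim_{y\to-\infty}\big(y\,v(\Omega)+\int_y^\infty v(\{\omega: f(\omega)>z\})\,dz\big)$. *)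

theory Defs
  imports "HOL-Analysis.Analysis"
begin

definition Sigma_cls :: "'a measure \<Rightarrow> 'a set set set" where
  "Sigma_cls M = {I. I \<subseteq> sets M \<and> (\<forall>A\<in>I. \<forall>B\<in>I. A \<subseteq> B \<or> B \<subseteq> A)
      \<and> {} \<in> I \<and> space M \<in> I \<and> sigma_sets (space M) I = sets M}"

definition chain_rep :: "'a set set \<Rightarrow> nat \<Rightarrow> (nat \<Rightarrow> 'a set) \<Rightarrow> (nat \<Rightarrow> 'a set) \<Rightarrow> bool" where
  "chain_rep I n C D \<longleftrightarrow> (\<forall>i<n. C i \<in> I \<and> D i \<in> I \<and> D i \<subseteq> C i)
      \<and> (\<forall>i. Suc i < n \<longrightarrow> C (Suc i) \<subseteq> D i)"

definition J_alg :: "'a set set \<Rightarrow> 'a set set" where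
  "J_alg I = {(\<Union>i<n. C i - D i) | n C D. chain_rep I n C D}"

text \<open>The set function mu_{v,I} on J (well-definedness is asserted by the paper).\<close>
definition mu_pre :: "('a set \<Rightarrow> real) \<Rightarrow> 'a set set \<Rightarrow> 'a set \<Rightarrow> real" where
  "mu_pre v I A = (SOME r. \<exists>n C D. chain_rep I n C D \<and> A = (\<Union>i<n. C i - D i)
        \<and> r = (\<Sum>i<n. v (C i) - v (D i)))"

definition continuous_sf :: "'a measure \<Rightarrow> ('a set \<Rightarrow> real) \<Rightarrow> bool" where
  "continuous_sf M v \<longleftrightarrow> (\<forall>I\<in>Sigma_cls M. \<forall>A :: nat \<Rightarrow> 'a set.
      range A \<subseteq> J_alg I \<longrightarrow> disjoint_family A \<longrightarrow> (\<Union>k. A k) \<in> J_alg I \<longrightarrow>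
      (\<lambda>k. mu_pre v I (A k)) sums mu_pre v I (\<Union>k. A k))"

definition mu_ext :: "'a measure \<Rightarrow> ('a set \<Rightarrow> real) \<Rightarrow> 'a set set \<Rightarrow> 'a measure" where
  "mu_ext M v I = (THE m. sets m = sets M \<and>
      (\<forall>A\<in>J_alg I. emeasure m A = ennreal (mu_pre v I A)))"

definition choquet :: "'a measure \<Rightarrow> ('a set \<Rightarrow> real) \<Rightarrow> ('a \<Rightarrow> real) \<Rightarrow> real" where
  "choquet M v f = Lim at_bot (\<lambda>y. y * v (space M) +
      (LBINT z:{y..}. v {\<omega>\<in>space M. f \<omega> > z}))"

end

theory Submission
  imports Defs
begin

lemma chain_rep_sub:
  assumes "chain_rep I n C D" "j < i" "i < n"
  shows "C i \<subseteq> D j"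
proof -
  have "Suc j \<le> k \<Longrightarrow> k < n \<Longrightarrow> C k \<subseteq> C (Suc j)" for k
  proof (induction k)
    case 0 then show ?case by simp
  next
    case (Suc k)
    show ?case
    proof (cases "Suc j = Suc k")
      case True then show ?thesis by simp
    next
      case False
      then have "C k \<subseteq> C (Suc j)" using Suc by simp
      moreover have "C (Suc k) \<subseteq> D k" "D k \<subseteq> C k" using assms(1) Suc.prems unfolding chain_rep_def by auto
      ultimately show ?thesis by blast
    qed
  qed
  then have "C i \<subseteq> C (Suc j)" using assms by simp
  moreover have "C (Suc j) \<subseteq> D j" using assms unfolding chain_rep_def by auto
  ultimately show ?thesis by auto
qed

lemma chain_rep_disj:
  assumes "chain_rep I n C D"
  shows "disjoint_family_on (\<lambda>i. C i - D i) {..<n}"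
  unfolding disjoint_family_on_def
proof (intro ballI impI)
  fix i j assume ij: "i \<in> {..<n}" "j \<in> {..<n}" "i \<noteq> j"
  show "(C i - D i) \<inter> (C j - D j) = {}"
  proof (cases "i < j")
    case True then show ?thesis using chain_rep_sub[OF assms True] ij by auto
  next
    case False then have "j < i" using ij by auto
    then show ?thesis using chain_rep_sub[OF assms \<open>j < i\<close>] ij by auto
  qed
qed

lemma chain_rep_indicator:
  assumes "chain_rep I n C D"
  shows "indicator (\<Union>i<n. C i - D i) \<omega> = (\<Sum>i<n. indicator (C i) \<omega> - indicator (D i) \<omega> :: real)"
proof -
  have "indicator (\<Union>i<n. C i - D i) \<omega> = (\<Sum>i<n. indicator (C i - D i) \<omega> :: real)"
    by (rule indicator_UN_disjoint) (use chain_rep_disj[OF assms] in auto)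
  also have "\<dots> = (\<Sum>i<n. indicator (C i) \<omega> - indicator (D i) \<omega>)"
  proof (rule sum.cong)
    fix i assume "i \<in> {..<n}"
    then have "D i \<subseteq> C i" using assms unfolding chain_rep_def by auto
    then show "indicator (C i - D i) \<omega> = (indicator (C i) \<omega> - indicator (D i) \<omega> :: real)"
      by (auto simp: indicator_def)
  qed simp
  finally show ?thesis .
qed

lemma chain_indep:
  assumes chain: "\<forall>A\<in>I. \<forall>B\<in>I. A \<subseteq> B \<or> B \<subseteq> A" and v0: "v {} = (0::real)"
  shows "finite K \<Longrightarrow> G ` K \<subseteq> I \<Longrightarrow> (\<forall>\<omega>. (\<Sum>k\<in>K. a k * indicator (G k) \<omega>) = (0::real))
    \<Longrightarrow> (\<Sum>k\<in>K. a k * v (G k)) = 0"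
proof (induction "card (G ` K)" arbitrary: K rule: less_induct)
  case less
  show ?case
  proof (cases "K = {}")
    case True then show ?thesis by simp
  next
    case False
    then have ne: "G ` K \<noteq> {}" by auto
    obtain m where m: "m \<in> G ` K" "\<forall>b\<in>G ` K. m \<le> b \<longrightarrow> m = b"
      using finite_has_maximal[of "G ` K"] ne less.prems(1) by auto
    have mx: "\<forall>b\<in>G ` K. b \<subseteq> m"
    proof
      fix b assume b: "b \<in> G ` K"
      have "m \<subseteq> b \<or> b \<subseteq> m" using chain[rule_format, of m b] less.prems(2) b m(1) by auto
      then show "b \<subseteq> m" using m(2) b by auto
    qed
    define K1 where "K1 = {k\<in>K. G k = m}"
    define K2 where "K2 = {k\<in>K. G k \<noteq> m}"
    have K12: "K = K1 \<union> K2" "K1 \<inter> K2 = {}" "finite K1" "finite K2"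
      using less.prems(1) by (auto simp: K1_def K2_def)
    have split: "(\<Sum>k\<in>K. h k) = (\<Sum>k\<in>K1. h k) + (\<Sum>k\<in>K2. h k)" for h :: "_ \<Rightarrow> real"
      using K12 by (metis sum.union_disjoint)
    show ?thesis
    proof (cases "m = {}")
      case True
      then have "\<forall>k\<in>K. G k = {}" using mx by auto
      then show ?thesis using v0 by simp
    next
      case False
      have "\<exists>\<omega>\<in>m. \<forall>k\<in>K2. \<omega> \<notin> G k"
      proof (cases "K2 = {}")
        case True then show ?thesis using False by auto
      next
        case K2ne: False
        obtain m2 where m2: "m2 \<in> G ` K2" "\<forall>b\<in>G ` K2. m2 \<le> b \<longrightarrow> m2 = b"
          using finite_has_maximal[of "G ` K2"] K2ne K12 by auto
        have mx2: "\<forall>b\<in>G ` K2. b \<subseteq> m2"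
        proof
          fix b assume b: "b \<in> G ` K2"
          have "G ` K2 \<subseteq> I" using less.prems(2) K12 by auto
          then have "m2 \<subseteq> b \<or> b \<subseteq> m2" using chain[rule_format, of m2 b] b m2(1) by auto
          then show "b \<subseteq> m2" using m2(2) b by auto
        qed
        obtain k2 where k2: "k2 \<in> K2" "m2 = G k2" using m2(1) by blast
        then have "k2 \<in> K" "G k2 \<noteq> m" by (auto simp: K2_def)
        then have "m2 \<subseteq> m" "m2 \<noteq> m" using mx k2(2) by auto
        then obtain \<omega> where "\<omega> \<in> m" "\<omega> \<notin> m2" by blast
        then show ?thesis using mx2 by blast
      qed
      then obtain \<omega> where \<omega>: "\<omega> \<in> m" "\<forall>k\<in>K2. \<omega> \<notin> G k" by blast
      have z2: "(\<Sum>k\<in>K2. a k * indicator (G k) \<omega>) = 0" using \<omega> by simp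
      have "(\<Sum>k\<in>K1. a k * indicator (G k) \<omega>) = (\<Sum>k\<in>K1. a k)"
        using \<omega> by (auto simp: K1_def)
      then have s1: "(\<Sum>k\<in>K1. a k) = 0"
        using less.prems(3) split[of "\<lambda>k. a k * indicator (G k) \<omega>"] z2 by simp
      have hyp2: "\<forall>\<omega>. (\<Sum>k\<in>K2. a k * indicator (G k) \<omega>) = 0"
      proof
        fix \<omega>'
        have "(\<Sum>k\<in>K1. a k * indicator (G k) \<omega>') = (\<Sum>k\<in>K1. a k) * indicator m \<omega>'"
          by (auto simp: K1_def sum_distrib_right)
        then show "(\<Sum>k\<in>K2. a k * indicator (G k) \<omega>') = 0"
          using less.prems(3) split[of "\<lambda>k. a k * indicator (G k) \<omega>'"] s1 by simp
      qed
      have "G ` K2 \<subseteq> G ` K - {m}" by (auto simp: K2_def)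
      then have "G ` K2 \<subset> G ` K" using m(1) by blast
      then have "card (G ` K2) < card (G ` K)"
        using less.prems(1) by (simp add: psubset_card_mono)
      then have IH: "(\<Sum>k\<in>K2. a k * v (G k)) = 0"
        using less.hyps[of K2] K12 less.prems(2) hyp2 by auto
      have "(\<Sum>k\<in>K1. a k * v (G k)) = (\<Sum>k\<in>K1. a k) * v m"
        by (auto simp: K1_def sum_distrib_right)
      then show ?thesis using split[of "\<lambda>k. a k * v (G k)"] IH s1 by simp
    qed
  qed
qed

lemma rep_sum_eq:
  assumes chain: "\<forall>A\<in>I. \<forall>B\<in>I. A \<subseteq> B \<or> B \<subseteq> A" and v0: "v {} = (0::real)"
    and r1: "chain_rep I n C D" and r2: "chain_rep I n' C' D'"
    and eq: "(\<Union>i<n. C i - D i) = (\<Union>i<n'. C' i - D' i)"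
  shows "(\<Sum>i<n. v (C i) - v (D i)) = (\<Sum>i<n'. v (C' i) - v (D' i))"
proof -
  define K where "K = ({..<n} <+> {..<n}) <+> ({..<n'} <+> {..<n'})"
  define G where "G = case_sum (case_sum C D) (case_sum C' D')"
  define a :: "(nat + nat) + (nat + nat) \<Rightarrow> real"
    where "a = case_sum (case_sum (\<lambda>_. 1) (\<lambda>_. -1)) (case_sum (\<lambda>_. -1) (\<lambda>_. 1))"
  have sK: "(\<Sum>k\<in>K. a k * h (G k)) = (\<Sum>i<n. h (C i) - h (D i)) - (\<Sum>i<n'. h (C' i) - h (D' i))"
    for h :: "'a set \<Rightarrow> real"
    by (simp add: K_def G_def a_def sum.Plus sum_subtractf sum_negf)
  have fin: "finite K" by (simp add: K_def)
  have GK: "G ` K \<subseteq> I" using r1 r2 by (auto simp: K_def G_def chain_rep_def)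
  have "\<forall>\<omega>. (\<Sum>k\<in>K. a k * indicator (G k) \<omega>) = (0::real)"
  proof
    fix \<omega>
    show "(\<Sum>k\<in>K. a k * indicator (G k) \<omega>) = (0::real)"
      using sK[of "\<lambda>S. indicator S \<omega>"] chain_rep_indicator[OF r1, of \<omega>]
        chain_rep_indicator[OF r2, of \<omega>] eq by simp
  qed
  from chain_indep[where v=v and a=a, OF chain v0 fin GK this] sK[of v] show ?thesis by simp
qed

lemma mu_pre_eq:
  assumes chain: "\<forall>A\<in>I. \<forall>B\<in>I. A \<subseteq> B \<or> B \<subseteq> A" and v0: "v {} = (0::real)"
    and r: "chain_rep I n C D"
  shows "mu_pre v I (\<Union>i<n. C i - D i) = (\<Sum>i<n. v (C i) - v (D i))"
proof -
  let ?A = "\<Union>i<n. C i - D i"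
  let ?P = "\<lambda>r. \<exists>n C D. chain_rep I n C D \<and> ?A = (\<Union>i<n. C i - D i) \<and> r = (\<Sum>i<n. v (C i) - v (D i))"
  have "?P (\<Sum>i<n. v (C i) - v (D i))" using r by blast
  then have "?P (SOME r. ?P r)" by (rule someI)
  then obtain n' C' D' where r': "chain_rep I n' C' D'" "?A = (\<Union>i<n'. C' i - D' i)"
    "(SOME r. ?P r) = (\<Sum>i<n'. v (C' i) - v (D' i))" by blast
  have "mu_pre v I ?A = (SOME r. ?P r)" unfolding mu_pre_def by simp
  also have "\<dots> = (\<Sum>i<n. v (C i) - v (D i))"
    using r'(3) rep_sum_eq[where v=v, OF chain v0 r r'(1) r'(2)] by simp
  finally show ?thesis .
qed

lemma SigmaD:
  assumes "I \<in> Sigma_cls M"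
  shows "I \<subseteq> sets M" "\<forall>A\<in>I. \<forall>B\<in>I. A \<subseteq> B \<or> B \<subseteq> A" "{} \<in> I" "space M \<in> I"
    "sigma_sets (space M) I = sets M"
  using assms unfolding Sigma_cls_def by blast+

lemma chain_Int:
  assumes "\<forall>A\<in>I. \<forall>B\<in>I. A \<subseteq> B \<or> B \<subseteq> A" "X \<in> I" "Y \<in> I"
  shows "X \<inter> Y \<in> I"
proof -
  have "X \<subseteq> Y \<or> Y \<subseteq> X" using assms by blast
  then show ?thesis using assms(2,3) by (metis inf.absorb1 inf.absorb2)
qed

lemma chain_Un:
  assumes "\<forall>A\<in>I. \<forall>B\<in>I. A \<subseteq> B \<or> B \<subseteq> A" "X \<in> I" "Y \<in> I"
  shows "X \<union> Y \<in> I"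
proof -
  have "X \<subseteq> Y \<or> Y \<subseteq> X" using assms by blast
  then show ?thesis using assms(2,3) by (metis sup.absorb1 sup.absorb2)
qed

definition Sdiff :: "'a set set \<Rightarrow> 'a set set" where
  "Sdiff I = {X - Y | X Y. X \<in> I \<and> Y \<in> I}"

lemma chain_rep_one:
  assumes "\<forall>A\<in>I. \<forall>B\<in>I. A \<subseteq> B \<or> B \<subseteq> A" "X \<in> I" "Y \<in> I"
  shows "chain_rep I 1 (\<lambda>_. X) (\<lambda>_. X \<inter> Y)"
  using chain_Int[OF assms] assms unfolding chain_rep_def by auto

lemma mu_pre_diff:
  assumes ch: "\<forall>A\<in>I. \<forall>B\<in>I. A \<subseteq> B \<or> B \<subseteq> A" and v0: "v {} = (0::real)" and XY: "X \<in> I" "Y \<in> I"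
  shows "mu_pre v I (X - Y) = v X - v (X \<inter> Y)"
proof -
  have u: "(\<Union>i<(1::nat). X - X \<inter> Y) = X - Y" by auto
  note h = mu_pre_eq[where v=v, OF ch v0 chain_rep_one[OF ch XY]]
  show ?thesis using h[unfolded u] by simp
qed

lemma diff_in_J:
  assumes ch: "\<forall>A\<in>I. \<forall>B\<in>I. A \<subseteq> B \<or> B \<subseteq> A" and XY: "X \<in> I" "Y \<in> I"
  shows "X - Y \<in> J_alg I"
proof -
  have "X - Y = (\<Union>i<(1::nat). (\<lambda>_. X) i - (\<lambda>_. X \<inter> Y) i) \<and> chain_rep I 1 (\<lambda>_. X) (\<lambda>_. X \<inter> Y)"
    using chain_rep_one[OF ch XY] by auto
  then show ?thesis unfolding J_alg_def by (intro CollectI exI)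
qed

lemma Sdiff_J:
  assumes ch: "\<forall>A\<in>I. \<forall>B\<in>I. A \<subseteq> B \<or> B \<subseteq> A"
  shows "Sdiff I \<subseteq> J_alg I"
  using diff_in_J[OF ch] unfolding Sdiff_def by blast

lemma Sdiff_nonneg:
  assumes ch: "\<forall>A\<in>I. \<forall>B\<in>I. A \<subseteq> B \<or> B \<subseteq> A" and v0: "v {} = (0::real)"
    and mono: "\<forall>A\<in>sets M. \<forall>B\<in>sets M. A \<subseteq> B \<longrightarrow> v A \<le> v B"
    and IM: "I \<subseteq> sets M" and s: "s \<in> Sdiff I"
  shows "0 \<le> mu_pre v I s"
proof -
  obtain X Y where XY: "X \<in> I" "Y \<in> I" "s = X - Y" using s unfolding Sdiff_def by blast
  have "X \<inter> Y \<in> sets M" "X \<in> sets M" using XY IM by auto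
  then have "v (X \<inter> Y) \<le> v X" using mono[rule_format, of "X \<inter> Y" X] by simp
  moreover have e: "mu_pre v I s = v X - v (X \<inter> Y)"
    unfolding XY(3) by (rule mu_pre_diff[where v=v, OF ch v0 XY(1,2)])
  ultimately show ?thesis by linarith
qed

lemma semiring_Sdiff:
  assumes ch: "\<forall>A\<in>I. \<forall>B\<in>I. A \<subseteq> B \<or> B \<subseteq> A" and IM: "I \<subseteq> Pow \<Omega>" and e: "{} \<in> I"
  shows "semiring_of_sets \<Omega> (Sdiff I)"
proof
  show "Sdiff I \<subseteq> Pow \<Omega>" using IM unfolding Sdiff_def by blast
  show "{} \<in> Sdiff I" unfolding Sdiff_def using e by blast
next
  fix a b assume a: "a \<in> Sdiff I" and b: "b \<in> Sdiff I"
  obtain X Y where XY: "X \<in> I" "Y \<in> I" "a = X - Y" using a unfolding Sdiff_def by blast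
  obtain X' Y' where XY': "X' \<in> I" "Y' \<in> I" "b = X' - Y'" using b unfolding Sdiff_def by blast
  have "a \<inter> b = (X \<inter> X') - (Y \<union> Y')" using XY XY' by auto
  moreover have "X \<inter> X' \<in> I" "Y \<union> Y' \<in> I" using chain_Int[OF ch] chain_Un[OF ch] XY XY' by auto
  ultimately show "a \<inter> b \<in> Sdiff I" unfolding Sdiff_def by blast
  define c1 where "c1 = X - (Y \<union> X')"
  define c2 where "c2 = (X \<inter> (X' \<inter> Y')) - Y"
  have "c1 \<in> Sdiff I" unfolding c1_def Sdiff_def using chain_Un[OF ch XY(2) XY'(1)] XY by blast
  moreover have "c2 \<in> Sdiff I" unfolding c2_def Sdiff_def
    using chain_Int[OF ch XY(1) chain_Int[OF ch XY'(1) XY'(2)]] XY by blast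
  moreover have "a - b = c1 \<union> c2" using XY XY' by (auto simp: c1_def c2_def)
  moreover have "c1 \<inter> c2 = {}" by (auto simp: c1_def c2_def)
  ultimately have h: "{c1, c2} \<subseteq> Sdiff I" "finite {c1, c2}" "disjoint {c1, c2}" "a - b = \<Union>{c1, c2}"
    unfolding disjoint_def pairwise_def disjnt_def by auto
  show "\<exists>C\<subseteq>Sdiff I. finite C \<and> disjoint C \<and> a - b = \<Union>C"
    by (rule exI[of _ "{c1, c2}"]) (intro conjI h)
qed
lemma mu_ext_props:
  assumes I: "I \<in> Sigma_cls M" and mono: "\<forall>A\<in>sets M. \<forall>B\<in>sets M. A \<subseteq> B \<longrightarrow> v A \<le> v B"
    and cont: "continuous_sf M v" and v0: "v {} = 0"
  shows "sets (mu_ext M v I) = sets M \<and> (\<forall>A\<in>J_alg I. emeasure (mu_ext M v I) A = ennreal (mu_pre v I A))"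
proof -
  note IM = SigmaD(1)[OF I] and ch = SigmaD(2)[OF I] and e = SigmaD(3)[OF I]
    and top = SigmaD(4)[OF I] and gen = SigmaD(5)[OF I]
  let ?\<Omega> = "space M"
  let ?S = "Sdiff I"
  let ?\<mu> = "\<lambda>s. ennreal (mu_pre v I s)"
  have IP: "I \<subseteq> Pow ?\<Omega>" using IM sets.sets_into_space by blast
  have SR: "semiring_of_sets ?\<Omega> ?S" by (rule semiring_Sdiff[OF ch IP e])
  have SM: "?S \<subseteq> sets M" using IM unfolding Sdiff_def by blast
  have IS: "I \<subseteq> ?S"
  proof
    fix X assume "X \<in> I"
    moreover have "X = X - {}" by simp
    ultimately show "X \<in> ?S" unfolding Sdiff_def using e by blast
  qed
  have mu0: "mu_pre v I {} = 0" using mu_pre_diff[where v=v, OF ch v0 e e] v0 by simp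
  have pos: "positive ?S ?\<mu>" unfolding positive_def using mu0 by simp
  have ca: "countably_additive ?S ?\<mu>" unfolding countably_additive_def
  proof (intro allI impI)
    fix A :: "nat \<Rightarrow> 'a set"
    assume A: "range A \<subseteq> ?S" "disjoint_family A" "(\<Union>i. A i) \<in> ?S"
    have JS: "?S \<subseteq> J_alg I" by (rule Sdiff_J[OF ch])
    have c: "\<forall>A. range A \<subseteq> J_alg I \<longrightarrow> disjoint_family A \<longrightarrow> (\<Union>k. A k) \<in> J_alg I \<longrightarrow>
      (\<lambda>k. mu_pre v I (A k)) sums mu_pre v I (\<Union>k. A k)"
      using cont I unfolding continuous_sf_def by (rule bspec)
    have r1: "range A \<subseteq> J_alg I" using A(1) JS by (rule order_trans)
    have r2: "(\<Union>k. A k) \<in> J_alg I" using JS A(3) by (rule subsetD)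
    have sm1: "(\<lambda>k. mu_pre v I (A k)) sums mu_pre v I (\<Union>k. A k)"
      using c r1 A(2) r2 by blast
    have sm2: "0 \<le> mu_pre v I (A k)" for k
    proof -
      have "A k \<in> ?S" using A(1) by (rule range_subsetD)
      then show ?thesis by (rule Sdiff_nonneg[where v=v, OF ch v0 mono IM])
    qed
    have "summable (\<lambda>k. mu_pre v I (A k))" using sm1 by (rule sums_summable)
    then have e1: "(\<Sum>i. ?\<mu> (A i)) = ennreal (\<Sum>k. mu_pre v I (A k))"
      by (rule suminf_ennreal2[OF sm2])
    have e2: "(\<Sum>k. mu_pre v I (A k)) = mu_pre v I (\<Union>k. A k)" using sm1 by (rule sums_unique[symmetric])
    show "(\<Sum>i. ?\<mu> (A i)) = ?\<mu> (\<Union>i. A i)" using e1 e2 by simp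
  qed
  obtain \<mu>' where agree: "\<forall>s\<in>?S. \<mu>' s = ?\<mu> s" and ms: "measure_space ?\<Omega> (sigma_sets ?\<Omega> ?S) \<mu>'"
    using semiring_of_sets.caratheodory[OF SR pos ca] by blast
  have sig: "sigma_sets ?\<Omega> ?S = sets M"
  proof
    show "sigma_sets ?\<Omega> ?S \<subseteq> sets M" using SM by (rule sets.sigma_sets_subset)
    show "sets M \<subseteq> sigma_sets ?\<Omega> ?S" using sigma_sets_mono'[OF IS, of ?\<Omega>] gen by simp
  qed
  define m0 where "m0 = measure_of ?\<Omega> (sets M) \<mu>'"
  have sets0: "sets m0 = sets M" unfolding m0_def
    by (simp add: sets.sigma_sets_eq sets.space_closed)
  have ms': "measure_space ?\<Omega> (sets M) \<mu>'" using ms sig by simp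
  have em: "emeasure m0 A = \<mu>' A" if "A \<in> sets M" for A
    unfolding m0_def
    by (rule emeasure_measure_of_sigma) (use ms' that in \<open>auto simp: measure_space_def\<close>)
  have J: "emeasure m0 A = ?\<mu> A" if A: "A \<in> J_alg I" for A
  proof -
    obtain n C D where r: "chain_rep I n C D" and Aeq: "A = (\<Union>i<n. C i - D i)"
      using A unfolding J_alg_def by blast
    have CD: "C i \<in> I" "D i \<in> I" "D i \<subseteq> C i" if "i < n" for i
      using r that unfolding chain_rep_def by auto
    have inS: "C i - D i \<in> ?S" if "i < n" for i using CD[OF that] unfolding Sdiff_def by blast
    have "emeasure m0 A = (\<Sum>i<n. emeasure m0 (C i - D i))"
      unfolding Aeq
      by (rule sum_emeasure[symmetric]) (use inS SM sets0 chain_rep_disj[OF r] in auto)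
    also have "\<dots> = (\<Sum>i<n. ennreal (v (C i) - v (D i)))"
    proof (rule sum.cong)
      fix i assume i: "i \<in> {..<n}"
      have "emeasure m0 (C i - D i) = ?\<mu> (C i - D i)" using em agree inS[of i] SM i by auto
      also have "\<dots> = ennreal (v (C i) - v (D i))"
      proof -
        have "C i \<inter> D i = D i" using CD(3)[of i] i by blast
        then show ?thesis using mu_pre_diff[where v=v, OF ch v0 CD(1,2)[of i]] i by simp
      qed
      finally show "emeasure m0 (C i - D i) = ennreal (v (C i) - v (D i))" .
    qed simp
    also have "\<dots> = ennreal (\<Sum>i<n. v (C i) - v (D i))"
    proof (rule sum_ennreal)
      fix i assume i: "i \<in> {..<n}"
      then have "D i \<in> sets M" "C i \<in> sets M" "D i \<subseteq> C i" using CD[of i] IM by auto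
      then show "0 \<le> v (C i) - v (D i)" using mono by simp
    qed
    also have "\<dots> = ?\<mu> A" using mu_pre_eq[where v=v, OF ch v0 r] Aeq by simp
    finally show ?thesis .
  qed
  have IJ: "X \<in> J_alg I" if "X \<in> I" for X using diff_in_J[OF ch that e] by simp
  have uniq: "m = m0" if m: "sets m = sets M" "\<forall>A\<in>J_alg I. emeasure m A = ?\<mu> A" for m
  proof (rule measure_eqI_generator_eq[of I ?\<Omega> m m0 "\<lambda>_. ?\<Omega>"])
    show "Int_stable I" unfolding Int_stable_def using chain_Int[OF ch] by blast
    show "I \<subseteq> Pow ?\<Omega>" by (rule IP)
    show "\<And>X. X \<in> I \<Longrightarrow> emeasure m X = emeasure m0 X" using m J IJ by auto
    show "sets m = sigma_sets ?\<Omega> I" using m gen by simp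
    show "sets m0 = sigma_sets ?\<Omega> I" using sets0 gen by simp
    show "range (\<lambda>_. ?\<Omega>) \<subseteq> I" using top by auto
    show "(\<Union>i. ?\<Omega>) = ?\<Omega>" by simp
    show "\<And>i. emeasure m ?\<Omega> \<noteq> \<infinity>" using m IJ[OF top] by simp
  qed
  have eq: "mu_ext M v I = m0" unfolding mu_ext_def
  proof (rule the_equality)
    show "sets m0 = sets M \<and> (\<forall>A\<in>J_alg I. emeasure m0 A = ?\<mu> A)" using sets0 J by blast
  next
    fix m assume "sets m = sets M \<and> (\<forall>A\<in>J_alg I. emeasure m A = ?\<mu> A)"
    then show "m = m0" by (elim conjE) (erule (1) uniq)
  qed
  show ?thesis unfolding eq
  proof (intro conjI ballI)
    show "sets m0 = sets M" by (rule sets0)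
  next
    fix A assume "A \<in> J_alg I"
    then show "emeasure m0 A = ?\<mu> A" by (rule J)
  qed
qed

lemma chain_extend:
  assumes I: "I \<in> Sigma_cls M"
    and Pc: "countable P" and PM: "P \<subseteq> sets M \<times> sets M"
    and LU: "\<forall>p\<in>P. fst p \<subseteq> snd p"
    and sep: "\<forall>p\<in>P. \<forall>q\<in>P. p \<noteq> q \<longrightarrow> snd p \<subseteq> fst q \<or> snd q \<subseteq> fst p"
    and cov: "space M \<subseteq> (\<Union>p\<in>P. snd p - fst p)"
  defines "I' \<equiv> {{}, space M} \<union> {fst p \<union> (snd p \<inter> C) | p C. p \<in> P \<and> C \<in> I}"
  shows "I' \<in> Sigma_cls M"
proof -
  note IM = SigmaD(1)[OF I] and ch = SigmaD(2)[OF I] and e = SigmaD(3)[OF I]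
    and top = SigmaD(4)[OF I] and gen = SigmaD(5)[OF I]
  let ?\<Omega> = "space M"
  have memI: "fst p \<union> (snd p \<inter> C) \<in> I'" if "p \<in> P" "C \<in> I" for p C
    unfolding I'_def using that by blast
  have memE: "\<exists>p C. p \<in> P \<and> C \<in> I \<and> x = fst p \<union> (snd p \<inter> C)" if "x \<in> I'" "x \<noteq> {}" "x \<noteq> ?\<Omega>" for x
    using that unfolding I'_def by blast
  have pM: "fst p \<in> sets M" "snd p \<in> sets M" if "p \<in> P" for p using PM that by auto
  have sub: "I' \<subseteq> sets M"
  proof
    fix x assume x: "x \<in> I'"
    show "x \<in> sets M"
    proof (cases "x = {} \<or> x = ?\<Omega>")
      case True then show ?thesis by auto
    next
      case False
      then obtain p C where "p \<in> P" "C \<in> I" "x = fst p \<union> (snd p \<inter> C)" using memE x by blast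
      moreover have "fst p \<in> sets M" "snd p \<in> sets M" "C \<in> sets M" using pM IM \<open>p \<in> P\<close> \<open>C \<in> I\<close> by auto
      ultimately show ?thesis by auto
    qed
  qed
  have inO: "x \<subseteq> ?\<Omega>" if "x \<in> I'" for x using sub that sets.sets_into_space by blast
  have chain: "\<forall>A\<in>I'. \<forall>B\<in>I'. A \<subseteq> B \<or> B \<subseteq> A"
  proof (intro ballI)
    fix x y assume x: "x \<in> I'" and y: "y \<in> I'"
    show "x \<subseteq> y \<or> y \<subseteq> x"
    proof (cases "x = {} \<or> x = ?\<Omega> \<or> y = {} \<or> y = ?\<Omega>")
      case True then show ?thesis using inO x y by auto
    next
      case False
      then obtain p C where p: "p \<in> P" "C \<in> I" "x = fst p \<union> (snd p \<inter> C)" using memE x by blast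
      obtain q D where q: "q \<in> P" "D \<in> I" "y = fst q \<union> (snd q \<inter> D)" using memE y False by blast
      show ?thesis
      proof (cases "p = q")
        case True
        have "C \<subseteq> D \<or> D \<subseteq> C" using ch p(2) q(2) by blast
        then show ?thesis using p(3) q(3) True by auto
      next
        case False
        then have "snd p \<subseteq> fst q \<or> snd q \<subseteq> fst p" using sep p(1) q(1) by blast
        moreover have "fst p \<subseteq> snd p" "fst q \<subseteq> snd q" using LU p(1) q(1) by auto
        moreover have "x \<subseteq> snd p" "fst p \<subseteq> x" "y \<subseteq> snd q" "fst q \<subseteq> y" using p(3) q(3) calculation(2,3) by auto
        ultimately show ?thesis by blast
      qed
    qed
  qed
  have e': "{} \<in> I'" and t': "?\<Omega> \<in> I'" unfolding I'_def by auto
  have gen': "sigma_sets ?\<Omega> I' = sets M"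
  proof
    show "sigma_sets ?\<Omega> I' \<subseteq> sets M" using sub by (rule sets.sigma_sets_subset)
    have IP: "I' \<subseteq> Pow ?\<Omega>" using inO by auto
    interpret SA: sigma_algebra ?\<Omega> "sigma_sets ?\<Omega> I'" by (rule sigma_algebra_sigma_sets[OF IP])
    have "I \<subseteq> sigma_sets ?\<Omega> I'"
    proof
      fix C assume C: "C \<in> I"
      have CO: "C \<subseteq> ?\<Omega>" using C IM sets.sets_into_space by blast
      have piece: "(fst p \<union> (snd p \<inter> C)) - fst p \<in> sigma_sets ?\<Omega> I'" if "p \<in> P" for p
      proof -
        have "fst p \<union> (snd p \<inter> C) \<in> sigma_sets ?\<Omega> I'" using memI[OF that C] by (rule sigma_sets.Basic)
        moreover have "fst p \<in> sigma_sets ?\<Omega> I'"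
          using memI[OF that e] by (intro sigma_sets.Basic) simp
        ultimately show ?thesis by (rule SA.Diff)
      qed
      have "C = (\<Union>p\<in>P. (fst p \<union> (snd p \<inter> C)) - fst p)"
      proof
        show "C \<subseteq> (\<Union>p\<in>P. (fst p \<union> (snd p \<inter> C)) - fst p)"
        proof
          fix w assume w: "w \<in> C"
          then obtain p where "p \<in> P" "w \<in> snd p - fst p" using cov CO by blast
          then show "w \<in> (\<Union>p\<in>P. (fst p \<union> (snd p \<inter> C)) - fst p)" using w by blast
        qed
        show "(\<Union>p\<in>P. (fst p \<union> (snd p \<inter> C)) - fst p) \<subseteq> C" by blast
      qed
      moreover have "(\<Union>p\<in>P. (fst p \<union> (snd p \<inter> C)) - fst p) \<in> sigma_sets ?\<Omega> I'"
        using Pc piece by (rule SA.countable_UN'')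
      ultimately show "C \<in> sigma_sets ?\<Omega> I'" by simp
    qed
    then have "sigma_sets ?\<Omega> I \<subseteq> sigma_sets ?\<Omega> I'" by (rule sigma_sets_mono)
    then show "sets M \<subseteq> sigma_sets ?\<Omega> I'" using gen by simp
  qed
  show ?thesis unfolding Sigma_cls_def using sub chain e' t' gen' by blast
qed

lemma memI'_helper:
  assumes "p \<in> P" "C \<in> I" "x = fst p \<union> (snd p \<inter> C)"
  shows "x \<in> {{}, space M} \<union> {fst p \<union> (snd p \<inter> C) | p C. p \<in> P \<and> C \<in> I}"
  using assms by blast

lemma v_cont_inc:
  assumes I: "I \<in> Sigma_cls M" and cont: "continuous_sf M v" and v0: "v {} = 0"
    and A: "range A \<subseteq> sets M" "incseq A"
  shows "(\<lambda>n. v (A n)) \<longlonglongrightarrow> v (\<Union>n. A n)"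
proof -
  let ?U = "\<Union>n. A n"
  let ?\<Omega> = "space M"
  note e = SigmaD(3)[OF I]
  define P where "P = range (\<lambda>n. (A n, A (Suc n))) \<union> {({}, A 0), (?U, ?\<Omega>)}"
  have UM: "?U \<in> sets M" using A(1) by blast
  have UO: "?U \<subseteq> ?\<Omega>" using UM sets.sets_into_space by blast
  have inc: "A i \<subseteq> A j" if "i \<le> j" for i j using A(2) that by (simp add: incseqD)
  have Pc: "countable P" unfolding P_def by simp
  have PM: "P \<subseteq> sets M \<times> sets M" unfolding P_def using A(1) UM by auto
  have LU: "\<forall>p\<in>P. fst p \<subseteq> snd p" unfolding P_def using inc UO by auto
  have f1: "A (Suc n) \<subseteq> A m \<or> A (Suc m) \<subseteq> A n" if "n \<noteq> m" for n m
  proof (cases "n < m")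
    case True then show ?thesis using inc[of "Suc n" m] by simp
  next
    case False then show ?thesis using inc[of "Suc m" n] that by simp
  qed
  have f2: "A 0 \<subseteq> A n" for n using inc by simp
  have f3: "A n \<subseteq> ?U" for n by blast
  have sep: "\<forall>p\<in>P. \<forall>q\<in>P. p \<noteq> q \<longrightarrow> snd p \<subseteq> fst q \<or> snd q \<subseteq> fst p"
  proof (intro ballI impI)
    fix p q assume p: "p \<in> P" and q: "q \<in> P" and pq: "p \<noteq> q"
    have cs: "(\<exists>n. x = (A n, A (Suc n))) \<or> x = ({}, A 0) \<or> x = (?U, ?\<Omega>)" if "x \<in> P" for x
      using that unfolding P_def by blast
    show "snd p \<subseteq> fst q \<or> snd q \<subseteq> fst p"
      using cs[OF p] cs[OF q]
    proof (elim disjE exE)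
      fix n m assume a: "p = (A n, A (Suc n))" "q = (A m, A (Suc m))"
      then have "n \<noteq> m" using pq by auto
      then show ?thesis using f1[of n m] a by simp
    qed (use f2 f3 UO pq in auto)
  qed
  have cov: "?\<Omega> \<subseteq> (\<Union>p\<in>P. snd p - fst p)"
  proof
    fix w assume w: "w \<in> ?\<Omega>"
    show "w \<in> (\<Union>p\<in>P. snd p - fst p)"
    proof (cases "w \<in> ?U")
      case False
      then have "w \<in> snd (?U, ?\<Omega>) - fst (?U, ?\<Omega>)" using w by simp
      moreover have "(?U, ?\<Omega>) \<in> P" unfolding P_def by simp
      ultimately show ?thesis by blast
    next
      case True
      then obtain n where n: "w \<in> A n" by blast
      have "w \<in> A 0 \<or> (\<exists>k. w \<in> A (Suc k) - A k)" using n
      proof (induction n)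
        case 0 then show ?case by simp
      next
        case (Suc n) then show ?case by blast
      qed
      then show ?thesis
      proof
        assume "w \<in> A 0"
        moreover have "({}, A 0) \<in> P" unfolding P_def by simp
        ultimately show ?thesis by force
      next
        assume "\<exists>k. w \<in> A (Suc k) - A k"
        then obtain k where "w \<in> A (Suc k) - A k" by blast
        moreover have "(A k, A (Suc k)) \<in> P" unfolding P_def by simp
        ultimately show ?thesis by force
      qed
    qed
  qed
  define I' where "I' = {{}, ?\<Omega>} \<union> {fst p \<union> (snd p \<inter> C) | p C. p \<in> P \<and> C \<in> I}"
  have I': "I' \<in> Sigma_cls M" unfolding I'_def by (rule chain_extend[OF I Pc PM LU sep cov])
  note ch' = SigmaD(2)[OF I']
  have AI: "A n \<in> I'" for n
    unfolding I'_def by (rule memI'_helper[of "(A n, A (Suc n))" _ "{}"]) (auto simp: P_def e)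
  have UI: "?U \<in> I'"
    unfolding I'_def by (rule memI'_helper[of "(?U, ?\<Omega>)" _ "{}"]) (auto simp: P_def e)
  define B where "B k = A (Suc k) - A k" for k
  have BJ: "range B \<subseteq> J_alg I'" unfolding B_def using diff_in_J[OF ch' AI AI] by auto
  have Bd: "disjoint_family B" unfolding B_def by (rule disjoint_family_Suc) (use inc in simp)
  have BU: "(\<Union>k. B k) = ?U - A 0"
  proof
    show "(\<Union>k. B k) \<subseteq> ?U - A 0" unfolding B_def using f2 by blast
    show "?U - A 0 \<subseteq> (\<Union>k. B k)"
    proof
      fix w assume "w \<in> ?U - A 0"
      then obtain n where n: "w \<in> A n" "w \<notin> A 0" by blast
      then show "w \<in> (\<Union>k. B k)"
      proof (induction n)
        case 0 then show ?case by simp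
      next
        case (Suc n) then show ?case unfolding B_def by blast
      qed
    qed
  qed
  have BUJ: "(\<Union>k. B k) \<in> J_alg I'" unfolding BU by (rule diff_in_J[OF ch' UI AI])
  have "(\<lambda>k. mu_pre v I' (B k)) sums mu_pre v I' (\<Union>k. B k)"
    using cont[unfolded continuous_sf_def] I' BJ Bd BUJ by blast
  moreover have "mu_pre v I' (B k) = v (A (Suc k)) - v (A k)" for k
  proof -
    have "A (Suc k) \<inter> A k = A k" using inc[of k "Suc k"] by auto
    then show ?thesis unfolding B_def using mu_pre_diff[where v=v, OF ch' v0 AI AI] by simp
  qed
  moreover have "mu_pre v I' (\<Union>k. B k) = v ?U - v (A 0)"
  proof -
    have "?U \<inter> A 0 = A 0" by blast
    then show ?thesis unfolding BU using mu_pre_diff[where v=v, OF ch' v0 UI AI] by simp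
  qed
  ultimately have "(\<lambda>k. v (A (Suc k)) - v (A k)) sums (v ?U - v (A 0))" by simp
  then have "(\<lambda>n. v (A n) - v (A 0)) \<longlonglongrightarrow> v ?U - v (A 0)"
    using sum_lessThan_telescope[of "\<lambda>k. v (A k)"] by (simp add: sums_def)
  then have "(\<lambda>n. (v (A n) - v (A 0)) + v (A 0)) \<longlonglongrightarrow> (v ?U - v (A 0)) + v (A 0)"
    by (intro tendsto_add tendsto_const)
  then show ?thesis by simp
qed

lemma v_cont_dec:
  assumes I: "I \<in> Sigma_cls M" and cont: "continuous_sf M v" and v0: "v {} = 0"
    and A: "range A \<subseteq> sets M" "decseq A"
  shows "(\<lambda>n. v (A n)) \<longlonglongrightarrow> v (\<Inter>n. A n)"
proof -
  let ?L = "\<Inter>n. A n"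
  let ?\<Omega> = "space M"
  note e = SigmaD(3)[OF I]
  define P where "P = range (\<lambda>n. (A (Suc n), A n)) \<union> {({}, ?L), (A 0, ?\<Omega>)}"
  have LM: "?L \<in> sets M" using A(1) by blast
  have AO: "A 0 \<subseteq> ?\<Omega>" using A(1) sets.sets_into_space by blast
  have dec: "A j \<subseteq> A i" if "i \<le> j" for i j using A(2) that by (simp add: decseqD)
  have Pc: "countable P" unfolding P_def by simp
  have PM: "P \<subseteq> sets M \<times> sets M" unfolding P_def using A(1) LM by auto
  have LU: "\<forall>p\<in>P. fst p \<subseteq> snd p" unfolding P_def using dec AO by auto
  have f1: "A n \<subseteq> A (Suc m) \<or> A m \<subseteq> A (Suc n)" if "n \<noteq> m" for n m
  proof (cases "n < m")
    case True then show ?thesis using dec[of "Suc n" m] by simp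
  next
    case False then show ?thesis using dec[of "Suc m" n] that by simp
  qed
  have f2: "A n \<subseteq> A 0" for n using dec by simp
  have f3: "?L \<subseteq> A n" for n by blast
  have sep: "\<forall>p\<in>P. \<forall>q\<in>P. p \<noteq> q \<longrightarrow> snd p \<subseteq> fst q \<or> snd q \<subseteq> fst p"
  proof (intro ballI impI)
    fix p q assume p: "p \<in> P" and q: "q \<in> P" and pq: "p \<noteq> q"
    have cs: "(\<exists>n. x = (A (Suc n), A n)) \<or> x = ({}, ?L) \<or> x = (A 0, ?\<Omega>)" if "x \<in> P" for x
      using that unfolding P_def by blast
    show "snd p \<subseteq> fst q \<or> snd q \<subseteq> fst p"
      using cs[OF p] cs[OF q]
    proof (elim disjE exE)
      fix n m assume a: "p = (A (Suc n), A n)" "q = (A (Suc m), A m)"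
      then have "n \<noteq> m" using pq by auto
      then show ?thesis using f1[of n m] a by simp
    qed (use f2 f3 AO pq in auto)
  qed
  have cov: "?\<Omega> \<subseteq> (\<Union>p\<in>P. snd p - fst p)"
  proof
    fix w assume w: "w \<in> ?\<Omega>"
    show "w \<in> (\<Union>p\<in>P. snd p - fst p)"
    proof (cases "w \<in> A 0")
      case False
      then have "w \<in> snd (A 0, ?\<Omega>) - fst (A 0, ?\<Omega>)" using w by simp
      moreover have "(A 0, ?\<Omega>) \<in> P" unfolding P_def by simp
      ultimately show ?thesis by blast
    next
      case True
      show ?thesis
      proof (cases "w \<in> ?L")
        case True
        then have "w \<in> snd ({}, ?L) - fst ({}, ?L)" by simp
        moreover have "({}, ?L) \<in> P" unfolding P_def by simp
        ultimately show ?thesis by blast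
      next
        case False
        then obtain n where n: "w \<notin> A n" by blast
        have "\<exists>k. w \<in> A k - A (Suc k)" using n
        proof (induction n)
          case 0 then show ?case using True by simp
        next
          case (Suc n) then show ?case by blast
        qed
        then obtain k where "w \<in> A k - A (Suc k)" by blast
        moreover have "(A (Suc k), A k) \<in> P" unfolding P_def by simp
        ultimately show ?thesis by force
      qed
    qed
  qed
  define I' where "I' = {{}, ?\<Omega>} \<union> {fst p \<union> (snd p \<inter> C) | p C. p \<in> P \<and> C \<in> I}"
  have I': "I' \<in> Sigma_cls M" unfolding I'_def by (rule chain_extend[OF I Pc PM LU sep cov])
  note ch' = SigmaD(2)[OF I']
  have AI: "A (Suc n) \<in> I'" for n
    unfolding I'_def by (rule memI'_helper[of "(A (Suc n), A n)" _ "{}"]) (auto simp: P_def e)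
  have A0I: "A 0 \<in> I'"
    unfolding I'_def by (rule memI'_helper[of "(A 0, ?\<Omega>)" _ "{}"]) (auto simp: P_def e)
  have AI': "A n \<in> I'" for n by (cases n) (use AI A0I in auto)
  have LI: "?L \<in> I'"
    unfolding I'_def by (rule memI'_helper[of "({}, ?L)" _ "?\<Omega>"]) (use f3[of 0] AO in \<open>auto simp: P_def SigmaD(4)[OF I]\<close>)
  define B where "B k = A k - A (Suc k)" for k
  have BJ: "range B \<subseteq> J_alg I'" unfolding B_def using diff_in_J[OF ch' AI' AI'] by auto
  have Bd: "disjoint_family B" unfolding disjoint_family_on_def
  proof (intro ballI impI)
    fix k l :: nat assume kl: "k \<noteq> l"
    show "B k \<inter> B l = {}"
    proof (cases "k < l")
      case True then show ?thesis using dec[of "Suc k" l] unfolding B_def by auto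
    next
      case False then show ?thesis using dec[of "Suc l" k] kl unfolding B_def by auto
    qed
  qed
  have BU: "(\<Union>k. B k) = A 0 - ?L"
  proof
    show "(\<Union>k. B k) \<subseteq> A 0 - ?L" unfolding B_def using f2 by blast
    show "A 0 - ?L \<subseteq> (\<Union>k. B k)"
    proof
      fix w assume w: "w \<in> A 0 - ?L"
      then obtain n where n: "w \<notin> A n" by blast
      then show "w \<in> (\<Union>k. B k)"
      proof (induction n)
        case 0 then show ?case using w by simp
      next
        case (Suc n) then show ?case unfolding B_def by blast
      qed
    qed
  qed
  have BUJ: "(\<Union>k. B k) \<in> J_alg I'" unfolding BU by (rule diff_in_J[OF ch' AI' LI])
  have "(\<lambda>k. mu_pre v I' (B k)) sums mu_pre v I' (\<Union>k. B k)"
    using cont[unfolded continuous_sf_def] I' BJ Bd BUJ by blast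
  moreover have "mu_pre v I' (B k) = v (A k) - v (A (Suc k))" for k
  proof -
    have "A k \<inter> A (Suc k) = A (Suc k)" using dec[of k "Suc k"] by auto
    then show ?thesis unfolding B_def using mu_pre_diff[where v=v, OF ch' v0 AI' AI'] by simp
  qed
  moreover have "mu_pre v I' (\<Union>k. B k) = v (A 0) - v ?L"
  proof -
    have "A 0 \<inter> ?L = ?L" by blast
    then show ?thesis unfolding BU using mu_pre_diff[where v=v, OF ch' v0 AI' LI] by simp
  qed
  ultimately have "(\<lambda>k. v (A k) - v (A (Suc k))) sums (v (A 0) - v ?L)" by simp
  then have "(\<lambda>n. v (A 0) - v (A n)) \<longlonglongrightarrow> v (A 0) - v ?L"
    using sum_lessThan_telescope'[of "\<lambda>k. v (A k)"] by (simp add: sums_def)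
  from tendsto_diff[OF tendsto_const this]
  have "(\<lambda>n. v (A 0) - (v (A 0) - v (A n))) \<longlonglongrightarrow> v (A 0) - (v (A 0) - v ?L)" .
  then show ?thesis by simp
qed

inductive_set monocl :: "'a set set \<Rightarrow> 'a set set" for R where
  mc_base: "a \<in> R \<Longrightarrow> a \<in> monocl R"
| mc_inc: "(\<And>i::nat. A i \<in> monocl R) \<Longrightarrow> incseq A \<Longrightarrow> (\<Union>i. A i) \<in> monocl R"
| mc_dec: "(\<And>i::nat. A i \<in> monocl R) \<Longrightarrow> decseq A \<Longrightarrow> (\<Inter>i. A i) \<in> monocl R"

lemma monocl_sigma:
  assumes alg: "algebra \<Omega> R"
  shows "sigma_sets \<Omega> R \<subseteq> monocl R"
proof -
  have RP: "R \<subseteq> Pow \<Omega>" using alg by (simp add: algebra_iff_Un)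
  have cR: "\<Omega> - a \<in> R" if "a \<in> R" for a using algebra.compl_sets[OF alg that] .
  have iR: "a \<inter> b \<in> R" if "a \<in> R" "b \<in> R" for a b
  proof -
    have "a \<inter> b = \<Omega> - ((\<Omega> - a) \<union> (\<Omega> - b))" using that RP by auto
    then show ?thesis using cR that algebra_iff_Un[of \<Omega> R] alg by simp
  qed
  have eR: "{} \<in> R" using alg by (simp add: algebra_iff_Un)
  have sub: "a \<subseteq> \<Omega>" if "a \<in> monocl R" for a
    using that
  proof induction
    case (mc_base a) then show ?case using RP by auto
  next
    case (mc_inc A) then show ?case by auto
  next
    case (mc_dec A)
    have "(\<Inter>i. A i) \<subseteq> A 0" by blast
    then show ?case using mc_dec.IH[of 0] by blast
  qed
  have compl: "\<Omega> - a \<in> monocl R" if "a \<in> monocl R" for a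
    using that
  proof induction
    case (mc_base a) then show ?case using cR mc_base.hyps by (intro monocl.mc_base)
  next
    case (mc_inc A)
    have eq: "\<Omega> - (\<Union>i. A i) = (\<Inter>i. \<Omega> - A i)" by auto
    have mo: "decseq (\<lambda>i. \<Omega> - A i)" using mc_inc.hyps(2) unfolding incseq_def decseq_def by auto
    show ?case unfolding eq by (rule monocl.mc_dec[OF mc_inc.IH mo])
  next
    case (mc_dec A)
    have eq: "\<Omega> - (\<Inter>i. A i) = (\<Union>i. \<Omega> - A i)" by auto
    have mo: "incseq (\<lambda>i. \<Omega> - A i)" using mc_dec.hyps(2) unfolding incseq_def decseq_def by auto
    show ?case unfolding eq by (rule monocl.mc_inc[OF mc_dec.IH mo])
  qed
  have int1: "a \<inter> b \<in> monocl R" if "a \<in> monocl R" "b \<in> R" for a b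
    using that(1)
  proof induction
    case (mc_base a) then show ?case using iR that(2) by (intro monocl.mc_base)
  next
    case (mc_inc A)
    have eq: "(\<Union>i. A i) \<inter> b = (\<Union>i. A i \<inter> b)" by auto
    have mo: "incseq (\<lambda>i. A i \<inter> b)" using mc_inc.hyps(2) unfolding incseq_def by auto
    show ?case unfolding eq by (rule monocl.mc_inc[OF mc_inc.IH mo])
  next
    case (mc_dec A)
    have eq: "(\<Inter>i. A i) \<inter> b = (\<Inter>i. A i \<inter> b)" by auto
    have mo: "decseq (\<lambda>i. A i \<inter> b)" using mc_dec.hyps(2) unfolding decseq_def by auto
    show ?case unfolding eq by (rule monocl.mc_dec[OF mc_dec.IH mo])
  qed
  have int2: "a \<inter> b \<in> monocl R" if "b \<in> monocl R" "a \<in> monocl R" for a b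
    using that(1)
  proof induction
    case (mc_base b) then show ?case using int1 that(2) by blast
  next
    case (mc_inc B)
    have eq: "a \<inter> (\<Union>i. B i) = (\<Union>i. a \<inter> B i)" by auto
    have mo: "incseq (\<lambda>i. a \<inter> B i)" using mc_inc.hyps(2) unfolding incseq_def by auto
    show ?case unfolding eq by (rule monocl.mc_inc[OF mc_inc.IH mo])
  next
    case (mc_dec B)
    have eq: "a \<inter> (\<Inter>i. B i) = (\<Inter>i. a \<inter> B i)" by auto
    have mo: "decseq (\<lambda>i. a \<inter> B i)" using mc_dec.hyps(2) unfolding decseq_def by auto
    show ?case unfolding eq by (rule monocl.mc_dec[OF mc_dec.IH mo])
  qed
  have un: "a \<union> b \<in> monocl R" if "a \<in> monocl R" "b \<in> monocl R" for a b
  proof -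
    have "a \<union> b = \<Omega> - ((\<Omega> - a) \<inter> (\<Omega> - b))" using sub that by auto
    moreover have "(\<Omega> - a) \<inter> (\<Omega> - b) \<in> monocl R" using int2 compl that by blast
    ultimately show ?thesis using compl by simp
  qed
  have e: "{} \<in> monocl R" using eR by (rule monocl.mc_base)
  have sa: "sigma_algebra \<Omega> (monocl R)"
    unfolding sigma_algebra_iff2
  proof (intro conjI ballI allI impI)
    show "monocl R \<subseteq> Pow \<Omega>" using sub by blast
    show "{} \<in> monocl R" by (rule e)
    show "\<Omega> - s \<in> monocl R" if "s \<in> monocl R" for s using compl that .
    fix A :: "nat \<Rightarrow> 'a set" assume A: "range A \<subseteq> monocl R"
    define F where "F n = (\<Union>i<n. A i)" for n
    have F: "F n \<in> monocl R" for n
    proof (induction n)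
      case 0 then show ?case using e by (simp add: F_def)
    next
      case (Suc n)
      have "F (Suc n) = A n \<union> F n" by (simp add: F_def lessThan_Suc)
      moreover have "A n \<in> monocl R" using A by (rule range_subsetD)
      ultimately show ?case using un Suc by simp
    qed
    have "incseq F" unfolding incseq_def F_def
    proof (intro allI impI)
      fix m n :: nat assume "m \<le> n"
      then show "(\<Union>i<m. A i) \<le> (\<Union>i<n. A i)" by (intro UN_mono) auto
    qed
    then have "(\<Union>n. F n) \<in> monocl R" using F by (intro monocl.mc_inc)
    moreover have "(\<Union>n. F n) = (\<Union>i. A i)" unfolding F_def by auto
    ultimately show "(\<Union>i. A i) \<in> monocl R" by simp
  qed
  have "R \<subseteq> monocl R" using monocl.mc_base by blast
  then show ?thesis by (rule sigma_algebra.sigma_sets_subset[OF sa])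
qed

lemma mu_ext_basic:
  assumes I: "I \<in> Sigma_cls M" and mono: "\<forall>A\<in>sets M. \<forall>B\<in>sets M. A \<subseteq> B \<longrightarrow> v A \<le> v B"
    and cont: "continuous_sf M v" and v0: "v {} = 0"
  shows "sets (mu_ext M v I) = sets M" and "space (mu_ext M v I) = space M"
    and "\<And>X Y. X \<in> I \<Longrightarrow> Y \<in> I \<Longrightarrow> measure (mu_ext M v I) (X - Y) = v X - v (X \<inter> Y)"
    and "\<And>X. X \<in> I \<Longrightarrow> measure (mu_ext M v I) X = v X"
    and "finite_measure (mu_ext M v I)"
proof -
  note P = mu_ext_props[OF I mono cont v0]
  note ch = SigmaD(2)[OF I] and IM = SigmaD(1)[OF I] and e = SigmaD(3)[OF I] and top = SigmaD(4)[OF I]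
  show s: "sets (mu_ext M v I) = sets M" using P by blast
  show sp: "space (mu_ext M v I) = space M" using sets_eq_imp_space_eq[OF s] .
  have em: "emeasure (mu_ext M v I) (X - Y) = ennreal (v X - v (X \<inter> Y))" if "X \<in> I" "Y \<in> I" for X Y
  proof -
    have "emeasure (mu_ext M v I) (X - Y) = ennreal (mu_pre v I (X - Y))"
      using P diff_in_J[OF ch that] by blast
    then show ?thesis using mu_pre_diff[where v=v, OF ch v0 that] by simp
  qed
  have nn: "0 \<le> v X - v (X \<inter> Y)" if "X \<in> I" "Y \<in> I" for X Y
  proof -
    have "X \<in> sets M" "X \<inter> Y \<in> sets M" using that IM by auto
    then have "v (X \<inter> Y) \<le> v X" using mono[rule_format, of "X \<inter> Y" X] by simp
    then show ?thesis by simp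
  qed
  show md: "measure (mu_ext M v I) (X - Y) = v X - v (X \<inter> Y)" if "X \<in> I" "Y \<in> I" for X Y
    unfolding measure_def using em[OF that] nn[OF that] by simp
  show "measure (mu_ext M v I) X = v X" if "X \<in> I" for X
    using md[OF that e] v0 by simp
  have "emeasure (mu_ext M v I) (space (mu_ext M v I)) = ennreal (v (space M) - v (space M \<inter> {}))"
    using em[OF top e] sp by simp
  then show "finite_measure (mu_ext M v I)" by (intro finite_measureI) simp
qed

lemma ring_le:
  assumes I: "I \<in> Sigma_cls M" and mono: "\<forall>A\<in>sets M. \<forall>B\<in>sets M. A \<subseteq> B \<longrightarrow> v A \<le> v B"
    and cont: "continuous_sf M v" and submod: "\<forall>A\<in>sets M. \<forall>B\<in>sets M. v A + v B \<ge> v (A \<union> B) + v (A \<inter> B)"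
    and v0: "v {} = 0"
  shows "finite C \<Longrightarrow> C \<subseteq> Sdiff I \<Longrightarrow> disjoint C \<Longrightarrow> measure (mu_ext M v I) (\<Union>C) \<le> v (\<Union>C)"
proof (induction "card C" arbitrary: C rule: less_induct)
  case less
  let ?m = "mu_ext M v I"
  note B = mu_ext_basic[OF I mono cont v0]
  note ch = SigmaD(2)[OF I] and IM = SigmaD(1)[OF I]
  have SM: "Sdiff I \<subseteq> sets M" using IM unfolding Sdiff_def by blast
  show ?case
  proof (cases "C = {}")
    case True then show ?thesis using v0 by simp
  next
    case False
    have rep: "\<forall>s\<in>C. \<exists>p. fst p \<in> I \<and> snd p \<in> I \<and> snd p \<subseteq> fst p \<and> s = fst p - snd p"
    proof
      fix s assume "s \<in> C"
      then have "s \<in> Sdiff I" using less.prems(2) by blast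
      then obtain X Y where XY: "X \<in> I" "Y \<in> I" "s = X - Y" unfolding Sdiff_def by blast
      have "X \<inter> Y \<in> I" by (rule chain_Int[OF ch XY(1,2)])
      moreover have "s = X - (X \<inter> Y)" using XY(3) by blast
      ultimately have "fst (X, X \<inter> Y) \<in> I \<and> snd (X, X \<inter> Y) \<in> I \<and> snd (X, X \<inter> Y) \<subseteq> fst (X, X \<inter> Y)
          \<and> s = fst (X, X \<inter> Y) - snd (X, X \<inter> Y)" using XY by simp
      then show "\<exists>p. fst p \<in> I \<and> snd p \<in> I \<and> snd p \<subseteq> fst p \<and> s = fst p - snd p" by (rule exI)
    qed
    obtain t where t: "\<forall>s\<in>C. fst (t s) \<in> I \<and> snd (t s) \<in> I \<and> snd (t s) \<subseteq> fst (t s) \<and> s = fst (t s) - snd (t s)"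
      using bchoice[OF rep] by blast
    obtain mx where mx: "mx \<in> (\<lambda>s. fst (t s)) ` C" "\<forall>b\<in>(\<lambda>s. fst (t s)) ` C. mx \<le> b \<longrightarrow> mx = b"
      using finite_has_maximal[of "(\<lambda>s. fst (t s)) ` C"] less.prems(1) False by auto
    obtain s0 where s0: "s0 \<in> C" "mx = fst (t s0)" using mx(1) by blast
    define X0 where "X0 = fst (t s0)"
    define Y0 where "Y0 = snd (t s0)"
    have X0I: "X0 \<in> I" and Y0I: "Y0 \<in> I" and YX: "Y0 \<subseteq> X0" and s0eq: "s0 = X0 - Y0"
      using t s0(1) unfolding X0_def Y0_def by auto
    have allX: "fst (t s) \<subseteq> X0" if "s \<in> C" for s
    proof -
      have "fst (t s) \<in> I" using t that by blast
      then have "X0 \<subseteq> fst (t s) \<or> fst (t s) \<subseteq> X0" using ch X0I by blast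
      moreover have "X0 \<subseteq> fst (t s) \<Longrightarrow> X0 = fst (t s)" using mx(2) that s0(2) unfolding X0_def by blast
      ultimately show ?thesis by blast
    qed
    define C' where "C' = C - {s0}"
    have A'Y: "\<Union>C' \<subseteq> Y0"
    proof
      fix w assume "w \<in> \<Union>C'"
      then obtain s where s: "s \<in> C" "s \<noteq> s0" "w \<in> s" unfolding C'_def by blast
      have "s \<subseteq> fst (t s)" using t s(1) by blast
      then have "w \<in> X0" using allX[OF s(1)] s(3) by blast
      moreover have "s \<inter> s0 = {}" using less.prems(3) s(1,2) s0(1) unfolding disjoint_def pairwise_def disjnt_def by blast
      ultimately show "w \<in> Y0" using s(3) s0eq by blast
    qed
    have U: "\<Union>C = s0 \<union> \<Union>C'" using s0(1) unfolding C'_def by blast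
    have dj: "s0 \<inter> \<Union>C' = {}" using A'Y s0eq by blast
    have CM: "C \<subseteq> sets M" using less.prems(2) SM by blast
    have C'M: "\<Union>C' \<in> sets M" using CM less.prems(1) unfolding C'_def by (intro sets.finite_Union) auto
    have s0M: "s0 \<in> sets M" using CM s0(1) by blast
    have UM: "\<Union>C \<in> sets M" using CM less.prems(1) by (intro sets.finite_Union) auto
    have X0M: "X0 \<in> sets M" and Y0M: "Y0 \<in> sets M" using X0I Y0I IM by auto
    interpret fm: finite_measure ?m by (rule B(5))
    have "measure ?m (\<Union>C) = measure ?m s0 + measure ?m (\<Union>C')"
      unfolding U by (rule fm.finite_measure_Union) (use s0M C'M dj B(1) in auto)
    moreover have "measure ?m s0 = v X0 - v Y0"
    proof -
      have "X0 \<inter> Y0 = Y0" using YX by blast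
      then show ?thesis using B(3)[OF X0I Y0I] s0eq by simp
    qed
    moreover have "measure ?m (\<Union>C') \<le> v (\<Union>C')"
    proof (rule less.hyps)
      show "card C' < card C" unfolding C'_def using s0(1) less.prems(1) by (meson card_Diff1_less)
      show "finite C'" unfolding C'_def using less.prems(1) by simp
      show "C' \<subseteq> Sdiff I" unfolding C'_def using less.prems(2) by blast
      show "disjoint C'" unfolding C'_def using less.prems(3) by (rule pairwise_subset) blast
    qed
    moreover have "v (\<Union>C) + v Y0 \<ge> v (\<Union>C \<union> Y0) + v (\<Union>C \<inter> Y0)"
      using submod UM Y0M by blast
    moreover have "\<Union>C \<union> Y0 = X0" using U A'Y s0eq YX by blast
    moreover have "\<Union>C \<inter> Y0 = \<Union>C'" using U A'Y s0eq by blast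
    ultimately show ?thesis by simp
  qed
qed

lemma m_le_v:
  assumes I: "I \<in> Sigma_cls M" and mono: "\<forall>A\<in>sets M. \<forall>B\<in>sets M. A \<subseteq> B \<longrightarrow> v A \<le> v B"
    and cont: "continuous_sf M v" and submod: "\<forall>A\<in>sets M. \<forall>B\<in>sets M. v A + v B \<ge> v (A \<union> B) + v (A \<inter> B)"
    and v0: "v {} = 0" and A: "A \<in> sets M"
  shows "measure (mu_ext M v I) A \<le> v A"
proof -
  let ?S = "Sdiff I" and ?\<Omega> = "space M" and ?m = "mu_ext M v I"
  note ch = SigmaD(2)[OF I] and IM = SigmaD(1)[OF I] and e = SigmaD(3)[OF I]
    and top = SigmaD(4)[OF I] and gen = SigmaD(5)[OF I]
  note B = mu_ext_basic[OF I mono cont v0]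
  define R where "R = {\<Union>C | C. C \<subseteq> ?S \<and> finite C \<and> disjoint C}"
  have IP: "I \<subseteq> Pow ?\<Omega>" using IM sets.sets_into_space by blast
  have SR: "semiring_of_sets ?\<Omega> ?S" by (rule semiring_Sdiff[OF ch IP e])
  have ring: "ring_of_sets ?\<Omega> R"
    using semiring_of_sets.generating_ring[OF SR] unfolding semiring_of_sets.generated_ring_def[OF SR] R_def
    by (simp add: conj_commute conj_left_commute)
  have SM: "?S \<subseteq> sets M" using IM unfolding Sdiff_def by blast
  have IR: "X \<in> R" if "X \<in> I" for X
  proof -
    have "X - {} \<in> ?S" unfolding Sdiff_def using that e by blast
    then have "{X} \<subseteq> ?S" by simp
    moreover have "finite {X}" "disjoint {X}" by (auto simp: disjoint_def)
    moreover have "X = \<Union>{X}" by simp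
    ultimately show ?thesis unfolding R_def by blast
  qed
  have alg: "algebra ?\<Omega> R" unfolding algebra_def algebra_axioms_def using ring IR[OF top] by simp
  have RM: "R \<subseteq> sets M"
  proof
    fix a assume "a \<in> R"
    then obtain C where C: "C \<subseteq> ?S" "finite C" "a = \<Union>C" unfolding R_def by blast
    have "\<Union>C \<in> sets M" using C SM by (intro sets.finite_Union) auto
    then show "a \<in> sets M" using C(3) by simp
  qed
  have genR: "sets M = sigma_sets ?\<Omega> R"
  proof
    show "sigma_sets ?\<Omega> R \<subseteq> sets M" using RM by (rule sets.sigma_sets_subset)
    have "I \<subseteq> R" using IR by blast
    then have "sigma_sets ?\<Omega> I \<subseteq> sigma_sets ?\<Omega> R" by (rule sigma_sets_mono')
    then show "sets M \<subseteq> sigma_sets ?\<Omega> R" using gen by simp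
  qed
  interpret fm: finite_measure ?m by (rule B(5))
  have P: "a \<in> sets M \<and> measure ?m a \<le> v a" if "a \<in> monocl R" for a
    using that
  proof induction
    case (mc_base a)
    then obtain C where C: "C \<subseteq> ?S" "finite C" "disjoint C" "a = \<Union>C" unfolding R_def by blast
    have "a \<in> sets M" using RM mc_base by (rule subsetD)
    then show ?case using ring_le[OF I mono cont submod v0 C(2,1,3)] C(4) by simp
  next
    case (mc_inc A)
    have rA: "range A \<subseteq> sets M" using mc_inc.IH by blast
    have l1: "(\<lambda>i. measure ?m (A i)) \<longlonglongrightarrow> measure ?m (\<Union>i. A i)"
      using rA mc_inc.hyps(2) B(1) by (intro fm.finite_Lim_measure_incseq) auto
    have l2: "(\<lambda>i. v (A i)) \<longlonglongrightarrow> v (\<Union>i. A i)" by (rule v_cont_inc[OF I cont v0 rA mc_inc.hyps(2)])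
    have "measure ?m (\<Union>i. A i) \<le> v (\<Union>i. A i)"
      by (rule LIMSEQ_le[OF l1 l2]) (use mc_inc.IH in blast)
    moreover have "(\<Union>i. A i) \<in> sets M" using rA by blast
    ultimately show ?case by simp
  next
    case (mc_dec A)
    have rA: "range A \<subseteq> sets M" using mc_dec.IH by blast
    have l1: "(\<lambda>i. measure ?m (A i)) \<longlonglongrightarrow> measure ?m (\<Inter>i. A i)"
      using rA mc_dec.hyps(2) B(1) by (intro fm.finite_Lim_measure_decseq) auto
    have l2: "(\<lambda>i. v (A i)) \<longlonglongrightarrow> v (\<Inter>i. A i)" by (rule v_cont_dec[OF I cont v0 rA mc_dec.hyps(2)])
    have "measure ?m (\<Inter>i. A i) \<le> v (\<Inter>i. A i)"
      by (rule LIMSEQ_le[OF l1 l2]) (use mc_dec.IH in blast)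
    moreover have "(\<Inter>i. A i) \<in> sets M" using rA by blast
    ultimately show ?case by simp
  qed
  have "A \<in> monocl R" using A genR monocl_sigma[OF alg] by blast
  then show ?thesis using P by blast
qed

lemma antimono_borel:
  fixes g :: "real \<Rightarrow> real"
  assumes "antimono g"
  shows "g \<in> borel_measurable borel"
proof -
  have "mono (\<lambda>z. - g z)" using assms unfolding antimono_def mono_def by auto
  then have "(\<lambda>z. - g z) \<in> borel_measurable borel" by (rule borel_measurable_mono)
  then have "(\<lambda>z. - (- g z)) \<in> borel_measurable borel" by measurable
  then show ?thesis by simp
qed

lemma antimono_integrable:
  fixes g :: "real \<Rightarrow> real"
  assumes am: "antimono g" and nn: "\<And>z. 0 \<le> g z" and le: "\<And>z. g z \<le> K" and zero: "\<And>z. b \<le> z \<Longrightarrow> g z = 0"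
  shows "integrable lborel (\<lambda>z. indicator {y..} z * g z)"
proof -
  have gm: "g \<in> borel_measurable lborel" using antimono_borel[OF am] by simp
  have hm: "(\<lambda>z. indicator {y..} z * g z) \<in> borel_measurable lborel" using gm by measurable
  have "integrable lborel (indicator {y..b} :: real \<Rightarrow> real)"
    by (rule integrable_real_indicator) (simp_all add: emeasure_lborel_Icc_eq)
  then have i2: "integrable lborel (\<lambda>z. K * indicator {y..b} z)" by (rule integrable_mult_right)
  show ?thesis
  proof (rule Bochner_Integration.integrable_bound[OF i2 hm], rule AE_I2)
    fix z
    have "\<bar>indicator {y..} z * g z\<bar> \<le> K * indicator {y..b} z"
      using nn[of z] le[of z] zero[of z] by (auto simp: indicator_def)
    moreover have "0 \<le> K" using nn[of 0] le[of 0] by simp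
    ultimately show "norm (indicator {y..} z * g z) \<le> norm (K * indicator {y..b} z)"
      by (simp add: indicator_def)
  qed
qed

lemma shift_const:
  fixes g :: "real \<Rightarrow> real"
  assumes int: "\<And>y. integrable lborel (\<lambda>z. indicator {y..} z * g z)"
    and K: "\<And>z. z < a \<Longrightarrow> g z = K" and ya: "y \<le> a"
  shows "y * K + (LBINT z:{y..}. g z) = a * K + (LBINT z:{a..}. g z)"
proof -
  have eq: "indicator {y..} z * g z = K * indicator {y..<a} z + indicator {a..} z * g z" for z
    using K[of z] ya by (auto simp: indicator_def)
  have i1: "integrable lborel (\<lambda>z. K * indicator {y..<a} z :: real)"
    by (rule integrable_mult_right, rule integrable_real_indicator) (use ya in simp_all)
  have "(LBINT z:{y..}. g z) = integral\<^sup>L lborel (\<lambda>z. indicator {y..} z * g z)"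
    by (simp add: set_lebesgue_integral_def)
  also have "\<dots> = integral\<^sup>L lborel (\<lambda>z. K * indicator {y..<a} z + indicator {a..} z * g z)"
    using eq by simp
  also have "\<dots> = integral\<^sup>L lborel (\<lambda>z. K * indicator {y..<a} z) + integral\<^sup>L lborel (\<lambda>z. indicator {a..} z * g z)"
    by (rule Bochner_Integration.integral_add[OF i1 int])
  also have "integral\<^sup>L lborel (\<lambda>z. K * indicator {y..<a} z) = K * (a - y)"
    using ya by (simp add: measure_lborel_Ico)
  also have "integral\<^sup>L lborel (\<lambda>z. indicator {a..} z * g z) = (LBINT z:{a..}. g z)"
    by (simp add: set_lebesgue_integral_def)
  finally show ?thesis by (simp add: algebra_simps)
qed

lemma translate_int:
  fixes g :: "real \<Rightarrow> real"
  shows "integral\<^sup>L lborel (\<lambda>z. indicator {y..} z * g (z + d)) = (LBINT z:{y+d..}. g z)"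
proof -
  have "(LBINT z:{y+d..}. g z) = integral\<^sup>L lborel (\<lambda>z. indicator {y+d..} z * g z)"
    by (simp add: set_lebesgue_integral_def)
  also have "\<dots> = \<bar>1\<bar> *\<^sub>R integral\<^sup>L lborel (\<lambda>x. indicator {y+d..} (d + 1 * x) * g (d + 1 * x))"
    by (rule lborel_integral_real_affine) simp
  also have "\<dots> = integral\<^sup>L lborel (\<lambda>z. indicator {y..} z * g (z + d))"
    by (simp add: indicator_def add.commute)
  finally show ?thesis by simp
qed

lemma layer_cake:
  fixes m :: "'a measure" and f :: "'a \<Rightarrow> real"
  assumes fm: "finite_measure m" and f[measurable]: "f \<in> borel_measurable m"
    and y: "\<And>\<omega>. \<omega> \<in> space m \<Longrightarrow> y \<le> f \<omega>" and b: "\<And>\<omega>. \<omega> \<in> space m \<Longrightarrow> f \<omega> \<le> b"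
  shows "integral\<^sup>L m f = y * measure m (space m) + (LBINT z:{y..}. measure m {\<omega>\<in>space m. z < f \<omega>})"
proof -
  interpret finite_measure m by (rule fm)
  interpret P: pair_sigma_finite m lborel
    by (intro pair_sigma_finite.intro sigma_finite_measure_axioms lborel.sigma_finite_measure_axioms)
  define g where "g z = measure m {\<omega>\<in>space m. z < f \<omega>}" for z
  have gam: "antimono g" unfolding antimono_def g_def
  proof (intro allI impI)
    fix x z :: real assume "x \<le> z"
    then show "measure m {\<omega>\<in>space m. z < f \<omega>} \<le> measure m {\<omega>\<in>space m. x < f \<omega>}"
      by (intro finite_measure_mono) auto
  qed
  have gm[measurable]: "g \<in> borel_measurable lborel" using antimono_borel[OF gam] by simp
  have intf: "integrable m f"
  proof (rule integrable_const_bound[where B="max \<bar>y\<bar> \<bar>b\<bar>"])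
    show "AE x in m. norm (f x) \<le> max \<bar>y\<bar> \<bar>b\<bar>"
      by (rule AE_I2) (use y b in \<open>fastforce simp: abs_le_iff\<close>)
  qed simp
  have e1: "integral\<^sup>L m (\<lambda>\<omega>. f \<omega> - y) = enn2real (\<integral>\<^sup>+\<omega>. ennreal (f \<omega> - y) \<partial>m)"
    by (rule enn2real_nn_integral_eq_integral[symmetric]) (use y in auto)
  have e2: "integral\<^sup>L lborel (\<lambda>z. indicator {y..} z * g z) = enn2real (\<integral>\<^sup>+z. ennreal (indicator {y..} z * g z) \<partial>lborel)"
    by (rule enn2real_nn_integral_eq_integral[symmetric]) (auto simp: g_def)
  have pm: "case_prod (\<lambda>\<omega> z. indicator {y..<f \<omega>} z :: ennreal) \<in> borel_measurable (m \<Otimes>\<^sub>M lborel)"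
  proof -
    have "(\<lambda>p. if y \<le> snd p \<and> snd p < f (fst p) then 1 else 0 :: ennreal) \<in> borel_measurable (m \<Otimes>\<^sub>M lborel)"
      by measurable
    moreover have "case_prod (\<lambda>\<omega> z. indicator {y..<f \<omega>} z :: ennreal) = (\<lambda>p. if y \<le> snd p \<and> snd p < f (fst p) then 1 else 0)"
      by (auto simp: indicator_def fun_eq_iff)
    ultimately show ?thesis by simp
  qed
  have key: "(\<integral>\<^sup>+\<omega>. ennreal (f \<omega> - y) \<partial>m) = (\<integral>\<^sup>+z. ennreal (indicator {y..} z * g z) \<partial>lborel)"
  proof -
    have "(\<integral>\<^sup>+\<omega>. ennreal (f \<omega> - y) \<partial>m) = (\<integral>\<^sup>+\<omega>. (\<integral>\<^sup>+z. indicator {y..<f \<omega>} z \<partial>lborel) \<partial>m)"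
    proof (rule nn_integral_cong)
      fix \<omega> assume "\<omega> \<in> space m"
      then have "y \<le> f \<omega>" by (rule y)
      then show "ennreal (f \<omega> - y) = (\<integral>\<^sup>+z. indicator {y..<f \<omega>} z \<partial>lborel)"
        by simp
    qed
    also have "\<dots> = (\<integral>\<^sup>+z. (\<integral>\<^sup>+\<omega>. indicator {y..<f \<omega>} z \<partial>m) \<partial>lborel)"
      by (rule P.Fubini'[OF pm, symmetric])
    also have "\<dots> = (\<integral>\<^sup>+z. ennreal (indicator {y..} z * g z) \<partial>lborel)"
    proof (rule nn_integral_cong)
      fix z :: real
      have "(\<integral>\<^sup>+\<omega>. indicator {y..<f \<omega>} z \<partial>m) = (\<integral>\<^sup>+\<omega>. indicator {\<omega>\<in>space m. y \<le> z \<and> z < f \<omega>} \<omega> \<partial>m)"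
        by (rule nn_integral_cong) (auto simp: indicator_def)
      also have "\<dots> = emeasure m {\<omega>\<in>space m. y \<le> z \<and> z < f \<omega>}"
        by (rule nn_integral_indicator) measurable
      also have "\<dots> = ennreal (indicator {y..} z * g z)"
        by (cases "y \<le> z") (simp_all add: g_def emeasure_eq_measure)
      finally show "(\<integral>\<^sup>+\<omega>. indicator {y..<f \<omega>} z \<partial>m) = ennreal (indicator {y..} z * g z)" .
    qed
    finally show ?thesis .
  qed
  have "integral\<^sup>L m f = integral\<^sup>L m (\<lambda>\<omega>. f \<omega> - y) + y * measure m (space m)"
    using Bochner_Integration.integral_diff[OF intf integrable_const[of y]] by simp
  also have "integral\<^sup>L m (\<lambda>\<omega>. f \<omega> - y) = integral\<^sup>L lborel (\<lambda>z. indicator {y..} z * g z)"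
    using e1 e2 key by simp
  also have "\<dots> = (LBINT z:{y..}. measure m {\<omega>\<in>space m. z < f \<omega>})"
    by (simp add: set_lebesgue_integral_def g_def)
  finally show ?thesis by simp
qed

lemma grid_chain:
  fixes f :: "'a \<Rightarrow> real"
  assumes I0: "I0 \<in> Sigma_cls M" and fmeas: "f \<in> borel_measurable M" and d: "0 < d"
  shows "\<exists>I\<in>Sigma_cls M. \<forall>k::int. {\<omega>\<in>space M. of_int k * d < f \<omega>} \<in> I"
proof -
  define U where "U k = {\<omega>\<in>space M. of_int k * d < f \<omega>}" for k :: int
  define P where "P = range (\<lambda>k. (U (k + 1), U k))"
  have UM: "U k \<in> sets M" for k
    using fmeas unfolding borel_measurable_iff_greater U_def by blast
  have Umono: "U l \<subseteq> U k" if "k \<le> l" for k l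
  proof -
    have "of_int k * d \<le> of_int l * d" using that d by (simp add: mult_right_mono)
    then show ?thesis unfolding U_def by auto
  qed
  have Pc: "countable P" unfolding P_def by simp
  have PM: "P \<subseteq> sets M \<times> sets M" unfolding P_def using UM by auto
  have LU: "\<forall>p\<in>P. fst p \<subseteq> snd p" unfolding P_def using Umono by auto
  have sep: "\<forall>p\<in>P. \<forall>q\<in>P. p \<noteq> q \<longrightarrow> snd p \<subseteq> fst q \<or> snd q \<subseteq> fst p"
  proof (intro ballI impI)
    fix p q assume p: "p \<in> P" and q: "q \<in> P" and pq: "p \<noteq> q"
    obtain k where k: "p = (U (k + 1), U k)" using p unfolding P_def by blast
    obtain l where l: "q = (U (l + 1), U l)" using q unfolding P_def by blast
    have "k \<noteq> l" using pq k l by auto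
    then have "k + 1 \<le> l \<or> l + 1 \<le> k" by linarith
    then show "snd p \<subseteq> fst q \<or> snd q \<subseteq> fst p"
      using Umono[of "k + 1" l] Umono[of "l + 1" k] k l by auto
  qed
  have cov: "space M \<subseteq> (\<Union>p\<in>P. snd p - fst p)"
  proof
    fix w assume w: "w \<in> space M"
    define k where "k = \<lceil>f w / d\<rceil> - 1"
    have c: "of_int \<lceil>f w / d\<rceil> - 1 < f w / d" "f w / d \<le> of_int \<lceil>f w / d\<rceil>"
      using ceiling_correct by auto
    have "of_int k < f w / d" using c(1) unfolding k_def by simp
    then have "of_int k * d < f w" using d by (simp add: pos_less_divide_eq)
    moreover have "f w / d \<le> of_int (k + 1)" using c(2) unfolding k_def by simp
    then have "f w \<le> of_int (k + 1) * d" using d by (simp add: pos_divide_le_eq)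
    ultimately have "w \<in> U k - U (k + 1)" using w unfolding U_def by auto
    moreover have "(U (k + 1), U k) \<in> P" unfolding P_def by simp
    ultimately show "w \<in> (\<Union>p\<in>P. snd p - fst p)" by force
  qed
  define I where "I = {{}, space M} \<union> {fst p \<union> (snd p \<inter> C) | p C. p \<in> P \<and> C \<in> I0}"
  have I: "I \<in> Sigma_cls M" unfolding I_def by (rule chain_extend[OF I0 Pc PM LU sep cov])
  have "U k \<in> I" for k
  proof -
    have "U k = fst (U (k + 1), U k) \<union> (snd (U (k + 1), U k) \<inter> space M)"
      using Umono[of k "k + 1"] sets.sets_into_space[OF UM[of k]] by auto
    then show ?thesis unfolding I_def
      by (rule memI'_helper[rotated 2]) (auto simp: P_def SigmaD(4)[OF I0])
  qed
  then show ?thesis using I unfolding U_def by blast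
qed

theorem theorem10:
  fixes M :: "'a measure" and v :: "'a set \<Rightarrow> real" and f :: "'a \<Rightarrow> real"
  assumes "Sigma_cls M \<noteq> {}"
    and "\<forall>A\<in>sets M. \<forall>B\<in>sets M. A \<subseteq> B \<longrightarrow> v A \<le> v B"
    and "continuous_sf M v"
    and "\<forall>A\<in>sets M. \<forall>B\<in>sets M. v A + v B \<ge> v (A \<union> B) + v (A \<inter> B)"
    and "v {} = 0"
    and "f \<in> borel_measurable M"
    and "bounded (f ` space M)"
  shows "choquet M v f = (SUP I\<in>Sigma_cls M. integral\<^sup>L (mu_ext M v I) f)"
proof -
  note ne = assms(1) and mono = assms(2) and cont = assms(3) and submod = assms(4)
    and v0 = assms(5) and fmeas = assms(6) and bnd = assms(7)
  let ?\<Omega> = "space M"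
  obtain B where B: "B > 0" "\<And>\<omega>. \<omega> \<in> ?\<Omega> \<Longrightarrow> \<bar>f \<omega>\<bar> \<le> B"
    using bnd unfolding bounded_pos by auto
  obtain I0 where I0: "I0 \<in> Sigma_cls M" using ne by blast
  define K where "K = v ?\<Omega>"
  define gv where "gv z = v {\<omega>\<in>?\<Omega>. z < f \<omega>}" for z
  have lvl: "{\<omega>\<in>?\<Omega>. z < f \<omega>} \<in> sets M" for z
    using fmeas unfolding borel_measurable_iff_greater by blast
  have vnn: "0 \<le> v A" if "A \<in> sets M" for A
    using mono[rule_format, of "{}" A] that v0 by simp
  have vle: "v A \<le> K" if "A \<in> sets M" for A
  proof -
    have "A \<subseteq> ?\<Omega>" using that by (rule sets.sets_into_space)
    then show ?thesis using mono[rule_format, of A ?\<Omega>] that unfolding K_def by simp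
  qed
  have gv_am: "antimono gv" unfolding antimono_def gv_def
  proof (intro allI impI)
    fix x z :: real assume "x \<le> z"
    then show "v {\<omega>\<in>?\<Omega>. z < f \<omega>} \<le> v {\<omega>\<in>?\<Omega>. x < f \<omega>}"
      by (intro mono[rule_format, OF lvl lvl]) auto
  qed
  have gv_nn: "0 \<le> gv z" for z unfolding gv_def using vnn lvl by blast
  have gv_le: "gv z \<le> K" for z unfolding gv_def using vle lvl by blast
  have gv_zero: "gv z = 0" if "B \<le> z" for z
  proof -
    have e: "{\<omega>\<in>?\<Omega>. z < f \<omega>} = {}" using B(2) that by (force simp: abs_le_iff)
    show ?thesis unfolding gv_def e by (rule v0)
  qed
  have gv_top: "gv z = K" if "z < - B" for z
  proof -
    have e: "{\<omega>\<in>?\<Omega>. z < f \<omega>} = ?\<Omega>" using B(2) that by (force simp: abs_le_iff)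
    show ?thesis unfolding gv_def K_def e by (rule refl)
  qed
  have int_gv: "integrable lborel (\<lambda>z. indicator {y..} z * gv z)" for y
    by (rule antimono_integrable[OF gv_am gv_nn gv_le gv_zero])
  have phi_const: "y * K + (LBINT z:{y..}. gv z) = (- B) * K + (LBINT z:{- B..}. gv z)" if "y \<le> - B" for y
    by (rule shift_const[OF int_gv gv_top that])
  have choq: "choquet M v f = y * K + (LBINT z:{y..}. gv z)" if "y \<le> - B" for y
  proof -
    have ev: "eventually (\<lambda>y. y * K + (LBINT z:{y..}. gv z) = (- B) * K + (LBINT z:{- B..}. gv z)) at_bot"
      unfolding eventually_at_bot_linorder using phi_const by blast
    have "((\<lambda>y. y * K + (LBINT z:{y..}. gv z)) \<longlongrightarrow> (- B) * K + (LBINT z:{- B..}. gv z)) at_bot"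
      by (rule tendsto_eventually[OF ev])
    then have "Lim at_bot (\<lambda>y. y * K + (LBINT z:{y..}. gv z)) = (- B) * K + (LBINT z:{- B..}. gv z)"
      by (intro tendsto_Lim) simp_all
    moreover have "choquet M v f = Lim at_bot (\<lambda>y. y * K + (LBINT z:{y..}. gv z))"
      unfolding choquet_def K_def gv_def by simp
    ultimately show ?thesis using phi_const[OF that] by simp
  qed
  have mfacts: "integral\<^sup>L (mu_ext M v I) f = y * K + (LBINT z:{y..}. measure (mu_ext M v I) {\<omega>\<in>?\<Omega>. z < f \<omega>})
      \<and> integrable lborel (\<lambda>z. indicator {y..} z * measure (mu_ext M v I) {\<omega>\<in>?\<Omega>. z < f \<omega>})
      \<and> (\<forall>z. measure (mu_ext M v I) {\<omega>\<in>?\<Omega>. z < f \<omega>} \<le> gv z)"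
    if I: "I \<in> Sigma_cls M" and y: "y \<le> - B" for I y
  proof -
    let ?m = "mu_ext M v I"
    note BB = mu_ext_basic[OF I mono cont v0]
    interpret fm: finite_measure ?m by (rule BB(5))
    have fm': "f \<in> borel_measurable ?m" using fmeas measurable_cong_sets[OF BB(1) refl] by blast
    have sp: "space ?m = ?\<Omega>" by (rule BB(2))
    have mO: "measure ?m ?\<Omega> = K" unfolding K_def by (rule BB(4)[OF SigmaD(4)[OF I]])
    have lc: "integral\<^sup>L ?m f = y * measure ?m (space ?m) + (LBINT z:{y..}. measure ?m {\<omega>\<in>space ?m. z < f \<omega>})"
    proof (rule layer_cake[OF BB(5) fm'])
      fix \<omega> assume "\<omega> \<in> space ?m"
      then have "\<bar>f \<omega>\<bar> \<le> B" using B(2) sp by simp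
      then show "y \<le> f \<omega>" "f \<omega> \<le> B" using y by (auto simp: abs_le_iff)
    qed
    define gm where "gm z = measure ?m {\<omega>\<in>?\<Omega>. z < f \<omega>}" for z
    have gm_am: "antimono gm" unfolding antimono_def gm_def
    proof (intro allI impI)
      fix x z :: real assume "x \<le> z"
      then show "measure ?m {\<omega>\<in>?\<Omega>. z < f \<omega>} \<le> measure ?m {\<omega>\<in>?\<Omega>. x < f \<omega>}"
        using lvl BB(1) by (intro fm.finite_measure_mono) auto
    qed
    have gm_le: "gm z \<le> K" for z
    proof -
      have "gm z \<le> measure ?m ?\<Omega>" unfolding gm_def using lvl BB(1) sets.sets_into_space
        by (intro fm.finite_measure_mono) auto
      then show ?thesis using mO by simp
    qed
    have gm_zero: "gm z = 0" if "B \<le> z" for z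
    proof -
      have e: "{\<omega>\<in>?\<Omega>. z < f \<omega>} = {}" using B(2) that by (force simp: abs_le_iff)
      show ?thesis unfolding gm_def e by simp
    qed
    have "integrable lborel (\<lambda>z. indicator {y..} z * gm z)"
      by (rule antimono_integrable[OF gm_am _ gm_le gm_zero]) (simp add: gm_def)
    moreover have "\<forall>z. gm z \<le> gv z" unfolding gm_def gv_def
      using m_le_v[OF I mono cont submod v0 lvl] by blast
    ultimately show ?thesis using lc mO sp unfolding gm_def by simp
  qed
  have upper: "integral\<^sup>L (mu_ext M v I) f \<le> choquet M v f" if I: "I \<in> Sigma_cls M" for I
  proof -
    note mf = mfacts[OF I order_refl]
    have "(LBINT z:{- B..}. measure (mu_ext M v I) {\<omega>\<in>?\<Omega>. z < f \<omega>}) \<le> (LBINT z:{- B..}. gv z)"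
      unfolding set_lebesgue_integral_def
    proof (rule integral_mono)
      show "integrable lborel (\<lambda>z. indicator {- B..} z *\<^sub>R measure (mu_ext M v I) {\<omega>\<in>?\<Omega>. z < f \<omega>})"
        using mf by simp
      show "integrable lborel (\<lambda>z. indicator {- B..} z *\<^sub>R gv z)" using int_gv by simp
      fix z
      show "indicator {- B..} z *\<^sub>R measure (mu_ext M v I) {\<omega>\<in>?\<Omega>. z < f \<omega>} \<le> indicator {- B..} z *\<^sub>R gv z"
        using mf by (simp add: indicator_def)
    qed
    then show ?thesis using mf choq[OF order_refl] by simp
  qed
  have lower: "\<exists>I\<in>Sigma_cls M. choquet M v f - d * K \<le> integral\<^sup>L (mu_ext M v I) f" if d: "0 < d" "d \<le> 1" for d
  proof -
    obtain I where I: "I \<in> Sigma_cls M" and lev: "\<And>k::int. {\<omega>\<in>?\<Omega>. of_int k * d < f \<omega>} \<in> I"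
      using grid_chain[OF I0 fmeas d(1)] by blast
    let ?m = "mu_ext M v I"
    note BB = mu_ext_basic[OF I mono cont v0]
    interpret fm: finite_measure ?m by (rule BB(5))
    define y0 where "y0 = - B - 1"
    have y0: "y0 \<le> - B" unfolding y0_def by simp
    note mf = mfacts[OF I y0]
    have pw: "gv (z + d) \<le> measure ?m {\<omega>\<in>?\<Omega>. z < f \<omega>}" for z
    proof -
      define k where "k = \<lceil>z / d\<rceil>"
      have c: "of_int k - 1 < z / d" "z / d \<le> of_int k" using ceiling_correct unfolding k_def by auto
      have k1: "z \<le> of_int k * d" using c(2) d(1) by (simp add: pos_divide_le_eq)
      have k2: "of_int k * d < z + d"
      proof -
        have "of_int k < z / d + 1" using c(1) by simp
        then have "of_int k * d < (z / d + 1) * d" using d(1) by (simp add: mult_strict_right_mono)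
        also have "\<dots> = z + d" using d(1) by (simp add: algebra_simps)
        finally show ?thesis .
      qed
      have "gv (z + d) \<le> v {\<omega>\<in>?\<Omega>. of_int k * d < f \<omega>}"
        unfolding gv_def using k2 by (intro mono[rule_format, OF lvl lvl]) auto
      also have "\<dots> = measure ?m {\<omega>\<in>?\<Omega>. of_int k * d < f \<omega>}" using BB(4)[OF lev] by simp
      also have "\<dots> \<le> measure ?m {\<omega>\<in>?\<Omega>. z < f \<omega>}"
        using k1 lvl BB(1) by (intro fm.finite_measure_mono) auto
      finally show ?thesis .
    qed
    have int_sh: "integrable lborel (\<lambda>z. indicator {y0..} z * gv (z + d))"
    proof (rule antimono_integrable[where K=K and b=B])
      show "antimono (\<lambda>z. gv (z + d))" using gv_am unfolding antimono_def by simp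
      show "0 \<le> gv (z + d)" for z by (rule gv_nn)
      show "gv (z + d) \<le> K" for z by (rule gv_le)
      show "gv (z + d) = 0" if "B \<le> z" for z using gv_zero that d(1) by simp
    qed
    have "integral\<^sup>L lborel (\<lambda>z. indicator {y0..} z * gv (z + d))
        \<le> (LBINT z:{y0..}. measure ?m {\<omega>\<in>?\<Omega>. z < f \<omega>})"
      unfolding set_lebesgue_integral_def
    proof (rule integral_mono)
      show "integrable lborel (\<lambda>z. indicator {y0..} z * gv (z + d))" by (rule int_sh)
      show "integrable lborel (\<lambda>z. indicator {y0..} z *\<^sub>R measure ?m {\<omega>\<in>?\<Omega>. z < f \<omega>})"
        using mf by simp
      fix z
      show "indicator {y0..} z * gv (z + d) \<le> indicator {y0..} z *\<^sub>R measure ?m {\<omega>\<in>?\<Omega>. z < f \<omega>}"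
        using pw[of z] by (simp add: indicator_def)
    qed
    moreover have "integral\<^sup>L lborel (\<lambda>z. indicator {y0..} z * gv (z + d)) = (LBINT z:{y0+d..}. gv z)"
      by (rule translate_int)
    moreover have "choquet M v f = (y0 + d) * K + (LBINT z:{y0+d..}. gv z)"
      by (rule choq) (use d(2) in \<open>simp add: y0_def\<close>)
    ultimately have "choquet M v f - d * K \<le> integral\<^sup>L ?m f"
      using mf by (simp add: algebra_simps)
    then show ?thesis using I by blast
  qed
  have bdd: "bdd_above ((\<lambda>I. integral\<^sup>L (mu_ext M v I) f) ` Sigma_cls M)"
    using upper by (intro bdd_aboveI2) blast
  have le: "(SUP I\<in>Sigma_cls M. integral\<^sup>L (mu_ext M v I) f) \<le> choquet M v f"
    using ne upper by (intro cSUP_least) auto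
  have ge: "choquet M v f - d * K \<le> (SUP I\<in>Sigma_cls M. integral\<^sup>L (mu_ext M v I) f)"
    if dd: "0 < d" "d \<le> 1" for d
  proof -
    obtain I where "I \<in> Sigma_cls M" "choquet M v f - d * K \<le> integral\<^sup>L (mu_ext M v I) f"
      using lower[OF dd] by blast
    then show ?thesis using bdd by (intro cSUP_upper2) auto
  qed
  have K0: "0 \<le> K" unfolding K_def using vnn by simp
  show ?thesis
  proof (rule antisym[OF _ le], rule ccontr)
    let ?S = "(SUP I\<in>Sigma_cls M. integral\<^sup>L (mu_ext M v I) f)"
    assume "\<not> choquet M v f \<le> ?S"
    then have gap: "?S < choquet M v f" by simp
    define d where "d = min 1 ((choquet M v f - ?S) / (2 * (K + 1)))"
    have d0: "0 < d" unfolding d_def using gap K0 by simp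
    have d1: "d \<le> 1" unfolding d_def by simp
    have "d * K \<le> (choquet M v f - ?S) / (2 * (K + 1)) * K"
      unfolding d_def using K0 by (intro mult_right_mono) auto
    also have "\<dots> < choquet M v f - ?S"
    proof -
      have "(choquet M v f - ?S) / (2 * (K + 1)) * K = (choquet M v f - ?S) * (K / (2 * (K + 1)))" by simp
      also have "\<dots> < (choquet M v f - ?S) * 1"
        using gap K0 by (intro mult_strict_left_mono) (auto simp: divide_less_eq)
      finally show ?thesis by simp
    qed
    finally show False using ge[OF d0 d1] by simp
  qed
qed

end
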